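(* Let $\Omega\subset\mathbb{O}^2$ be open and $M>0$. For $u,v$ in the class $\{w\in OPSH(\Omega)\cap C(\Omega):|w|\le M\}$, the family of measures $\det(Hess_{\mathbb{O}}(u),Hess_{\mathbb{O}}(v))$ is locally uniformly bounded, i.e. for every compact $K\subset\Omega$ there is $C_K$ with $\int_K\det(Hess_{\mathbb{O}}(u),Hess_{\mathbb{O}}(v))\le C_K$ for all such $u,v$.
   Context: $\mathbb{O}$: octonions (basis $e_0=1,\dots,e_7$, $e_p^2=-1$, $e_pe_q=-e_qe_p$ for $p\ne q\ge1$); $\mathbb{O}^2\cong\mathbb{R}^{16}$, $\mathbf{x}_\alpha=\sum_px_{\alpha p}e_p$. $\overline{\partial}_\alpha F=\sum_pe_p\partial F/\partial x_{\alpha p}$, $\partial_\alpha F=\sum_p(\partial F/\partial x_{\alpha p})\overline e_p$, $Hess_{\mathbb{O}}(u)=(\overline\partial_\alpha\partial_\beta u)$, $\det(A,B)=\frac12(a_{11}b_{22}+a_{22}b_{11}-2\operatorname{Re}(a_{12}b_{21}))$. $OPSH(\Omega)$: upper semicontinuous functions subharmonic on every affine octonionic line (translate of $\{(\mathbf{x},\mathbf{a}\mathbf{x})\}$, $\mathbf{a}\in\mathbb{O}$, or of $\{(0,\mathbf{x})\}$). For continuous OPSH $u,v$, $\det(Hess_{\mathbb{O}}(u),Hess_{\mathbb{O}}(v))$ is the mixed octonionic Monge–Ampère measure (Alesker): the unique nonnegative measure equal to $\det(Hess_{\mathbb{O}}(u),Hess_{\mathbb{O}}(v))dV$ for $C^2$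 functions and weakly continuous under locally uniform convergence of continuous OPSH functions. *)

theory Defs
  imports "HOL-Analysis.Analysis"
begin

text \<open>The product type is a Euclidean space of dimension 8 whose
standard orthonormal basis (Basis) consists of the real unit and seven
imaginary units e_p with e_p^2 = -1 that pairwise anticommute.\<close>

type_synonym quat = "complex \<times> complex"
type_synonym oct = "quat \<times> quat"

definition qconj :: "quat \<Rightarrow> quat" where
  "qconj x = (cnj (fst x), - snd x)"

definition qmul :: "quat \<Rightarrow> quat \<Rightarrow> quat" where
  "qmul x y = (fst x * fst y - cnj (snd y) * snd x, snd y * fst x + snd x * cnj (fst y))"

definition oconj :: "oct \<Rightarrow> oct" where
  "oconj x = (qconj (fst x), - snd x)"

definition omul :: "oct \<Rightarrow> oct \<Rightarrow> oct" where
  "omul x y = (qmul (fst x) (fst y) - qmul (qconj (snd y)) (snd x),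
               qmul (snd y) (fst x) + qmul (snd x) (qconj (fst y)))"

definition oone :: oct where
  "oone = ((1, 0), (0, 0))"

definition ore :: "oct \<Rightarrow> real" where
  "ore x = x \<bullet> oone"

type_synonym oct2 = "oct \<times> oct"

text \<open>Direction of the real coordinate x_{alpha p} (alpha in {1,2}, p a basis octonion).\<close>
definition odir :: "nat \<Rightarrow> oct \<Rightarrow> oct2" where
  "odir \<alpha> e = (if \<alpha> = 1 then (e, 0) else (0, e))"

definition pd :: "(oct2 \<Rightarrow> real) \<Rightarrow> oct2 \<Rightarrow> oct2 \<Rightarrow> real" where
  "pd F v x = deriv (\<lambda>t. F (x + t *\<^sub>R v)) 0"

definition C2_on :: "oct2 set \<Rightarrow> (oct2 \<Rightarrow> real) \<Rightarrow> bool" where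
  "C2_on \<Omega> F \<longleftrightarrow> continuous_on \<Omega> F \<and>
     (\<forall>v\<in>Basis. (\<forall>x\<in>\<Omega>. ((\<lambda>t. F (x + t *\<^sub>R v)) has_real_derivative pd F v x) (at 0))
        \<and> continuous_on \<Omega> (pd F v)
        \<and> (\<forall>w\<in>Basis. (\<forall>x\<in>\<Omega>. ((\<lambda>t. pd F v (x + t *\<^sub>R w)) has_real_derivative pd (pd F v) w x) (at 0))
             \<and> continuous_on \<Omega> (pd (pd F v) w)))"

text \<open>Octonionic Hessian: entry (alpha,beta) is dbar_alpha d_beta u
  = sum_p e_p * (d/dx_{alpha p} sum_q (du/dx_{beta q}) conj(e_q)).\<close>
definition oHess :: "(oct2 \<Rightarrow> real) \<Rightarrow> oct2 \<Rightarrow> nat \<Rightarrow> nat \<Rightarrow> oct" where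
  "oHess u x \<alpha> \<beta> =
     (\<Sum>p\<in>Basis. omul p (\<Sum>q\<in>Basis. pd (pd u (odir \<beta> q)) (odir \<alpha> p) x *\<^sub>R oconj q))"

text \<open>Mixed determinant det(A,B) = 1/2 (a11 b22 + a22 b11 - 2 Re(a12 b21)); the diagonal
  entries of octonionic Hessians of C^2 functions are real, so the products a11 b22, a22 b11
  are real and are read off via their real part.\<close>
definition odet :: "(nat \<Rightarrow> nat \<Rightarrow> oct) \<Rightarrow> (nat \<Rightarrow> nat \<Rightarrow> oct) \<Rightarrow> real" where
  "odet A B = 1/2 * (ore (omul (A 1 1) (B 2 2)) + ore (omul (A 2 2) (B 1 1))
                     - 2 * ore (omul (A 1 2) (B 2 1)))"

definition usc_on :: "'a::metric_space set \<Rightarrow> ('a \<Rightarrow> real) \<Rightarrow> bool" where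
  "usc_on S f \<longleftrightarrow> (\<forall>x\<in>S. \<forall>e>0. \<exists>d>0. \<forall>y\<in>S. dist y x < d \<longrightarrow> f y < f x + e)"

definition subharmonic_on :: "oct set \<Rightarrow> (oct \<Rightarrow> real) \<Rightarrow> bool" where
  "subharmonic_on D f \<longleftrightarrow> usc_on D f \<and>
     (\<forall>x r. 0 < r \<and> cball x r \<subseteq> D \<longrightarrow>
        set_integrable lborel (cball x r) f \<and>
        f x \<le> (LINT y:cball x r|lborel. f y) / measure lborel (cball x r))"

definition OPSH :: "oct2 set \<Rightarrow> (oct2 \<Rightarrow> real) \<Rightarrow> bool" where
  "OPSH \<Omega> u \<longleftrightarrow> usc_on \<Omega> u \<and>
     (\<forall>z0 a. subharmonic_on {x. z0 + (x, omul a x) \<in> \<Omega>} (\<lambda>x. u (z0 + (x, omul a x)))) \<and>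
     (\<forall>z0. subharmonic_on {x. z0 + (0, x) \<in> \<Omega>} (\<lambda>x. u (z0 + (0, x))))"

definition COPSH :: "oct2 set \<Rightarrow> (oct2 \<Rightarrow> real) \<Rightarrow> bool" where
  "COPSH \<Omega> u \<longleftrightarrow> OPSH \<Omega> u \<and> continuous_on \<Omega> u"

text \<open>MA U u v is the mixed octonionic Monge--Ampere measure of the continuous OPSH functions
  u, v on the open set U (a Borel measure on O^2, relevant on U).\<close>
definition is_mixed_oct_MA ::
  "(oct2 set \<Rightarrow> (oct2 \<Rightarrow> real) \<Rightarrow> (oct2 \<Rightarrow> real) \<Rightarrow> oct2 measure) \<Rightarrow> bool" where
  "is_mixed_oct_MA MA \<longleftrightarrow>
    (\<forall>U u v. open U \<and> COPSH U u \<and> COPSH U v \<longrightarrow>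
        sets (MA U u v) = sets borel \<and>
        (\<forall>K. compact K \<and> K \<subseteq> U \<longrightarrow> emeasure (MA U u v) K < \<infinity>)) \<and>
    (\<forall>U u v. open U \<and> COPSH U u \<and> COPSH U v \<and> C2_on U u \<and> C2_on U v \<longrightarrow>
        (\<forall>A\<in>sets borel. A \<subseteq> U \<longrightarrow>
           emeasure (MA U u v) A = (\<integral>\<^sup>+ x\<in>A. ennreal (odet (oHess u x) (oHess v x)) \<partial>lborel))) \<and>
    (\<forall>U W u v u' v'. open U \<and> open W \<and> W \<subseteq> U \<and> COPSH U u \<and> COPSH U v \<and>
        COPSH W u' \<and> COPSH W v' \<and> (\<forall>x\<in>W. u' x = u x \<and> v' x = v x) \<longrightarrow>
        (\<forall>A\<in>sets borel. A \<subseteq> W \<longrightarrow> emeasure (MA W u' v') A = emeasure (MA U u v) A)) \<and>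
    (\<forall>U us vs u v. open U \<and> (\<forall>j. COPSH U (us j) \<and> COPSH U (vs j)) \<and> COPSH U u \<and> COPSH U v \<and>
        (\<forall>K. compact K \<and> K \<subseteq> U \<longrightarrow> uniform_limit K us u sequentially \<and> uniform_limit K vs v sequentially)
        \<longrightarrow> (\<forall>\<phi>::oct2 \<Rightarrow> real. continuous_on UNIV \<phi> \<and> compact (closure {x. \<phi> x \<noteq> 0}) \<and>
                closure {x. \<phi> x \<noteq> 0} \<subseteq> U \<longrightarrow>
              (\<lambda>j. \<integral>x. \<phi> x \<partial>MA U (us j) (vs j)) \<longlonglongrightarrow> (\<integral>x. \<phi> x \<partial>MA U u v)))"

end

theory Submission
  imports Defs
begin

lemma qmul_scaleR_left: "qmul (c *\<^sub>R x) y = c *\<^sub>R qmul x y"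
  by (simp add: qmul_def scaleR_conv_of_real algebra_simps)
lemma qmul_scaleR_right: "qmul x (c *\<^sub>R y) = c *\<^sub>R qmul x y"
  by (simp add: qmul_def scaleR_conv_of_real algebra_simps)
lemma qconj_scaleR: "qconj (c *\<^sub>R x) = c *\<^sub>R qconj x"
  by (simp add: qconj_def scaleR_conv_of_real)
lemma omul_scaleR_left: "omul (c *\<^sub>R x) y = c *\<^sub>R omul x y"
  by (simp add: omul_def qmul_scaleR_left qmul_scaleR_right qconj_scaleR algebra_simps)
lemma omul_scaleR_right: "omul x (c *\<^sub>R y) = c *\<^sub>R omul x y"
  by (simp add: omul_def qmul_scaleR_left qmul_scaleR_right qconj_scaleR algebra_simps)

lemma continuous_on_qmul[continuous_intros]:
  "continuous_on S f \<Longrightarrow> continuous_on S g \<Longrightarrow> continuous_on S (\<lambda>x. qmul (f x) (g x))"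
  unfolding qmul_def by (intro continuous_intros)
lemma continuous_on_qconj[continuous_intros]:
  "continuous_on S f \<Longrightarrow> continuous_on S (\<lambda>x. qconj (f x))"
  unfolding qconj_def by (intro continuous_intros)
lemma continuous_on_omul[continuous_intros]:
  "continuous_on S f \<Longrightarrow> continuous_on S g \<Longrightarrow> continuous_on S (\<lambda>x. omul (f x) (g x))"
  unfolding omul_def by (intro continuous_intros)
lemma continuous_on_ore[continuous_intros]:
  "continuous_on S f \<Longrightarrow> continuous_on S (\<lambda>x. ore (f x))"
  unfolding ore_def by (intro continuous_intros)
lemma ore_scaleR: "ore (c *\<^sub>R x) = c * ore x"
  by (simp add: ore_def)

lemma odet_scale:
  "odet (\<lambda>a b. t *\<^sub>R A a b) (\<lambda>a b. t *\<^sub>R B a b) = t^2 * odet A B"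
  by (simp add: odet_def omul_scaleR_left omul_scaleR_right ore_scaleR power2_eq_square algebra_simps)

lemma continuous_imp_usc: "continuous_on S f \<Longrightarrow> usc_on S f"
  unfolding usc_on_def continuous_on_iff dist_real_def
proof (intro ballI allI impI)
  fix x e assume c: "\<forall>x\<in>S. \<forall>e>0. \<exists>d>0. \<forall>x'\<in>S. dist x' x < d \<longrightarrow> \<bar>f x' - f x\<bar> < e"
    and x: "x \<in> S" and e: "(e::real) > 0"
  then obtain d where "d > 0" "\<forall>x'\<in>S. dist x' x < d \<longrightarrow> \<bar>f x' - f x\<bar> < e" by blast
  then show "\<exists>d>0. \<forall>y\<in>S. dist y x < d \<longrightarrow> f y < f x + e" by force
qed

lemma usc_on_subset: "usc_on S f \<Longrightarrow> T \<subseteq> S \<Longrightarrow> usc_on T f"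
  unfolding usc_on_def by blast

lemma usc_on_scale: assumes "usc_on S f" "0 \<le> t" shows "usc_on S (\<lambda>x. t * f x)"
proof (cases "t = 0")
  case True then show ?thesis by (simp add: usc_on_def)
next
  case False
  then have t: "t > 0" using assms by simp
  show ?thesis unfolding usc_on_def
  proof (intro ballI allI impI)
    fix x e assume x: "x \<in> S" and e: "(e::real) > 0"
    have "e / t > 0" using e t by simp
    then obtain d where d: "d > 0" "\<forall>y\<in>S. dist y x < d \<longrightarrow> f y < f x + e / t"
      using assms(1) x unfolding usc_on_def by blast
    have "t * f y < t * f x + e" if "y \<in> S" "dist y x < d" for y
    proof -
      have "t * f y < t * (f x + e / t)" using d that t by simp
      also have "\<dots> = t * f x + e" using t by (simp add: field_simps)
      finally show ?thesis .
    qed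
    then show "\<exists>d>0. \<forall>y\<in>S. dist y x < d \<longrightarrow> t * f y < t * f x + e" using d by blast
  qed
qed

lemma subharmonic_on_subset:
  "subharmonic_on D f \<Longrightarrow> D' \<subseteq> D \<Longrightarrow> subharmonic_on D' f"
  unfolding subharmonic_on_def using usc_on_subset by blast

lemma subharmonic_on_scale:
  assumes "subharmonic_on D f" "0 \<le> t" shows "subharmonic_on D (\<lambda>x. t * f x)"
  unfolding subharmonic_on_def
proof (intro conjI allI impI)
  show "usc_on D (\<lambda>x. t * f x)" using assms usc_on_scale subharmonic_on_def by blast
  fix x r assume h: "0 < r \<and> cball x r \<subseteq> D"
  then have i: "set_integrable lborel (cball x r) f"
    and le: "f x \<le> (LINT y:cball x r|lborel. f y) / measure lborel (cball x r)"
    using assms(1) unfolding subharmonic_on_def by blast+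
  show "set_integrable lborel (cball x r) (\<lambda>x. t * f x)"
    using i by (rule set_integrable_mult_right)
  have "t * f x \<le> t * ((LINT y:cball x r|lborel. f y) / measure lborel (cball x r))"
    using le assms(2) by (rule mult_left_mono)
  also have "\<dots> = (LINT y:cball x r|lborel. t * f y) / measure lborel (cball x r)"
    by (simp add: set_integral_mult_right)
  finally show "t * f x \<le> (LINT y:cball x r|lborel. t * f y) / measure lborel (cball x r)" .
qed

lemma COPSH_scale: assumes "COPSH W f" "0 \<le> t" shows "COPSH W (\<lambda>x. t * f x)"
proof -
  have 1: "usc_on W (\<lambda>x. t * f x)" using assms usc_on_scale unfolding COPSH_def OPSH_def by blast
  have 2: "continuous_on W (\<lambda>x. t * f x)" using assms unfolding COPSH_def by (auto intro!: continuous_intros)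
  have 3: "subharmonic_on {x. z0 + (x, omul a x) \<in> W} (\<lambda>x. t * f (z0 + (x, omul a x)))" for z0 a
    using assms subharmonic_on_scale unfolding COPSH_def OPSH_def by blast
  have 4: "subharmonic_on {x. z0 + (0, x) \<in> W} (\<lambda>x. t * f (z0 + (0, x)))" for z0
    using assms subharmonic_on_scale unfolding COPSH_def OPSH_def by blast
  show ?thesis unfolding COPSH_def OPSH_def using 1 2 3 4 by blast
qed

lemma COPSH_subset: assumes "COPSH U f" "W \<subseteq> U" shows "COPSH W f"
proof -
  have a: "{x. z0 + (x, omul a x) \<in> W} \<subseteq> {x. z0 + (x, omul a x) \<in> U}" for z0 a using assms(2) by auto
  have b: "{x. z0 + (0, x) \<in> W} \<subseteq> {x. z0 + (0, x) \<in> U}" for z0 using assms(2) by auto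
  have "usc_on W f" using assms usc_on_subset unfolding COPSH_def OPSH_def by blast
  moreover have "continuous_on W f" using assms continuous_on_subset unfolding COPSH_def by blast
  moreover have "subharmonic_on {x. z0 + (x, omul a x) \<in> W} (\<lambda>x. f (z0 + (x, omul a x)))" for z0 a
    using assms(1) a[of z0 a] subharmonic_on_subset unfolding COPSH_def OPSH_def by blast
  moreover have "subharmonic_on {x. z0 + (0, x) \<in> W} (\<lambda>x. f (z0 + (0, x)))" for z0
    using assms(1) b[of z0] subharmonic_on_subset unfolding COPSH_def OPSH_def by blast
  ultimately show ?thesis unfolding COPSH_def OPSH_def by blast
qed

lemma DERIV_maxpow:
  assumes "n \<ge> 1"
  shows "((\<lambda>r::real. (max 0 r)^(Suc n)) has_real_derivative (real (Suc n) * (max 0 r)^n)) (at r)"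
proof (cases "r > 0")
  case True
  have "((\<lambda>r::real. r^(Suc n)) has_real_derivative (real (Suc n) * r^n)) (at r)"
    by (rule derivative_eq_intros refl | simp)+
  then have "((\<lambda>r::real. r^(Suc n)) has_real_derivative (real (Suc n) * (max 0 r)^n)) (at r)"
    using True by (simp add: max_def)
  then show ?thesis
    by (rule has_field_derivative_transform_within_open[where S="{0<..}"]) (use True in auto)
next
  case False
  show ?thesis
  proof (cases "r < 0")
    case True
    have "((\<lambda>r::real. 0) has_real_derivative 0) (at r)" by simp
    then have d: "((\<lambda>r::real. (max 0 r)^(Suc n)) has_real_derivative 0) (at r)"
      by (rule has_field_derivative_transform_within_open[where S="{..<0}"]) (use True in auto)
    have z: "real (Suc n) * (max 0 r)^n = 0" using assms True by (simp add: max_def power_0_left)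
    show ?thesis unfolding z by (rule d)
  next
    case False
    with \<open>\<not> r > 0\<close> have r: "r = 0" by simp
    have "((\<lambda>h. ((max 0 (0 + h))^(Suc n) - (max 0 0)^(Suc n)) / h) \<longlongrightarrow> 0) (at (0::real))"
    proof (rule Lim_null_comparison)
      show "\<forall>\<^sub>F h in at 0. norm (((max 0 (0 + h))^(Suc n) - (max 0 0)^(Suc n)) / h) \<le> \<bar>h\<bar>^n"
      proof (rule always_eventually, rule allI)
        fix h :: real
        show "norm (((max 0 (0 + h))^(Suc n) - (max 0 0)^(Suc n)) / h) \<le> \<bar>h\<bar>^n"
        proof (cases "h > 0")
          case True then show ?thesis by (simp add: power_abs)
        next
          case False then show ?thesis using assms by (simp add: max_def)
        qed
      qed
      have t: "((\<lambda>h::real. \<bar>h\<bar>^n) \<longlongrightarrow> \<bar>0\<bar>^n) (at 0)"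
        by (intro tendsto_intros)
      have z0: "\<bar>0::real\<bar>^n = 0" using assms by (simp add: power_0_left)
      show "((\<lambda>h::real. \<bar>h\<bar>^n) \<longlongrightarrow> 0) (at 0)" using t unfolding z0 .
    qed
    moreover have z: "real (Suc n) * (max 0 r)^n = 0" using assms r by (simp add: max_def power_0_left)
    ultimately show ?thesis unfolding z DERIV_def using r by simp
  qed
qed

definition bumpP :: "real \<Rightarrow> oct2 \<Rightarrow> real" where
  "bumpP e z = (max 0 (e^2 - z \<bullet> z))^3"

definition bumpc :: "real \<Rightarrow> real" where
  "bumpc e = 1 / (LINT z|lborel. bumpP e z)"

definition rho :: "real \<Rightarrow> oct2 \<Rightarrow> real" where
  "rho e z = bumpc e * (max 0 (e^2 - z \<bullet> z))^3"

definition rho1 :: "real \<Rightarrow> oct2 \<Rightarrow> oct2 \<Rightarrow> real" where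
  "rho1 e v z = bumpc e * (3 * (max 0 (e^2 - z \<bullet> z))^2 * (-2 * (z \<bullet> v)))"

definition rho2 :: "real \<Rightarrow> oct2 \<Rightarrow> oct2 \<Rightarrow> oct2 \<Rightarrow> real" where
  "rho2 e v w z = bumpc e * (6 * max 0 (e^2 - z \<bullet> z) * (-2 * (z \<bullet> w)) * (-2 * (z \<bullet> v))
      + 3 * (max 0 (e^2 - z \<bullet> z))^2 * (-2 * (w \<bullet> v)))"

lemma DERIV_qline:
  "((\<lambda>s. e^2 - (z + s *\<^sub>R v) \<bullet> (z + s *\<^sub>R v)) has_real_derivative (-2 * ((z + s *\<^sub>R v) \<bullet> v))) (at s)"
proof -
  have eq: "(\<lambda>s. e^2 - (z + s *\<^sub>R v) \<bullet> (z + s *\<^sub>R v)) = (\<lambda>s. e^2 - z \<bullet> z - 2 * s * (z \<bullet> v) - s^2 * (v \<bullet> v))"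
    by (auto simp: inner_add_left inner_add_right inner_commute power2_eq_square algebra_simps)
  have "((\<lambda>s. e^2 - z \<bullet> z - 2 * s * (z \<bullet> v) - s^2 * (v \<bullet> v)) has_real_derivative (-2 * (z \<bullet> v) - 2 * s * (v \<bullet> v))) (at s)"
    by (rule derivative_eq_intros refl | simp)+
  moreover have "-2 * (z \<bullet> v) - 2 * s * (v \<bullet> v) = -2 * ((z + s *\<^sub>R v) \<bullet> v)"
    by (simp add: inner_add_left algebra_simps)
  ultimately show ?thesis using eq by simp
qed

lemma DERIV_lin:
  "((\<lambda>s. (z + s *\<^sub>R w) \<bullet> v) has_real_derivative (w \<bullet> v)) (at s)"
proof -
  have eq: "(\<lambda>s. (z + s *\<^sub>R w) \<bullet> v) = (\<lambda>s. z \<bullet> v + s * (w \<bullet> v))"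
    by (auto simp: inner_add_left)
  have "((\<lambda>s. z \<bullet> v + s * (w \<bullet> v)) has_real_derivative (w \<bullet> v)) (at s)"
    by (rule derivative_eq_intros refl | simp)+
  then show ?thesis using eq by simp
qed

lemma DERIV_rho:
  "((\<lambda>s. rho e (z + s *\<^sub>R v)) has_real_derivative rho1 e v (z + s *\<^sub>R v)) (at s)"
proof -
  have m: "((\<lambda>r::real. (max 0 r)^(Suc 2)) has_real_derivative (real (Suc 2) * (max 0 r)^2)) (at r)" for r
    by (rule DERIV_maxpow) simp
  have "((\<lambda>s. (max 0 (e^2 - (z + s *\<^sub>R v) \<bullet> (z + s *\<^sub>R v)))^(Suc 2)) has_real_derivative
        (real (Suc 2) * (max 0 (e^2 - (z + s *\<^sub>R v) \<bullet> (z + s *\<^sub>R v)))^2) * (-2 * ((z + s *\<^sub>R v) \<bullet> v))) (at s)"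
    using DERIV_chain'[OF DERIV_qline m] by simp
  then have "((\<lambda>s. bumpc e * (max 0 (e^2 - (z + s *\<^sub>R v) \<bullet> (z + s *\<^sub>R v)))^(Suc 2)) has_real_derivative
        bumpc e * ((real (Suc 2) * (max 0 (e^2 - (z + s *\<^sub>R v) \<bullet> (z + s *\<^sub>R v)))^2) * (-2 * ((z + s *\<^sub>R v) \<bullet> v)))) (at s)"
    by (rule DERIV_cmult)
  then show ?thesis unfolding rho_def rho1_def by (simp add: numeral_3_eq_3 mult.assoc)
qed

lemma DERIV_rho1:
  "((\<lambda>s. rho1 e v (z + s *\<^sub>R w)) has_real_derivative rho2 e v w (z + s *\<^sub>R w)) (at s)"
proof -
  have m: "((\<lambda>r::real. (max 0 r)^2) has_real_derivative (2 * max 0 r)) (at r)" for r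
    using DERIV_maxpow[of 1 r] by (simp add: numeral_2_eq_2)
  define q where "q = (\<lambda>s. e^2 - (z + s *\<^sub>R w) \<bullet> (z + s *\<^sub>R w))"
  define P where "P = (\<lambda>s. -2 * ((z + s *\<^sub>R w) \<bullet> v))"
  have a: "((\<lambda>s. (max 0 (q s))^2) has_real_derivative
        (2 * max 0 (q s)) * (-2 * ((z + s *\<^sub>R w) \<bullet> w))) (at s)"
    unfolding q_def using DERIV_chain'[OF DERIV_qline m] by simp
  have b: "(P has_real_derivative -2 * (w \<bullet> v)) (at s)"
    unfolding P_def using DERIV_cmult[OF DERIV_lin, of "-2" z w v s] by simp
  have d: "((\<lambda>s. (bumpc e * 3) * ((max 0 (q s))^2 * P s)) has_real_derivative
     (bumpc e * 3) * ((2 * max 0 (q s)) * (-2 * ((z + s *\<^sub>R w) \<bullet> w)) * P s + (-2 * (w \<bullet> v)) * (max 0 (q s))^2)) (at s)"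
    by (intro DERIV_cmult DERIV_mult a b)
  have eq: "(\<lambda>s. rho1 e v (z + s *\<^sub>R w)) = (\<lambda>s. (bumpc e * 3) * ((max 0 (q s))^2 * P s))"
    by (simp add: rho1_def q_def P_def fun_eq_iff algebra_simps)
  have eqv: "rho2 e v w (z + s *\<^sub>R w) = (bumpc e * 3) * ((2 * max 0 (q s)) * (-2 * ((z + s *\<^sub>R w) \<bullet> w)) * P s + (-2 * (w \<bullet> v)) * (max 0 (q s))^2)"
    by (simp add: rho2_def q_def P_def algebra_simps)
  show ?thesis using d eq eqv by simp
qed

lemma continuous_rho[continuous_intros]: "continuous_on S (\<lambda>x. rho e (f x))" if "continuous_on S f"
  unfolding rho_def using that by (intro continuous_intros)
lemma continuous_rho1[continuous_intros]: "continuous_on S (\<lambda>x. rho1 e v (f x))" if "continuous_on S f"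
  unfolding rho1_def using that by (intro continuous_intros)
lemma continuous_rho2[continuous_intros]: "continuous_on S (\<lambda>x. rho2 e v w (f x))" if "continuous_on S f"
  unfolding rho2_def using that by (intro continuous_intros)

lemma rho_zero: "norm z \<ge> e \<Longrightarrow> e \<ge> 0 \<Longrightarrow> rho e z = 0"
proof -
  assume "norm z \<ge> e" "e \<ge> 0"
  then have "e^2 \<le> (norm z)^2" by (simp add: power_mono)
  then have "e^2 - z \<bullet> z \<le> 0" by (simp add: power2_norm_eq_inner)
  then show "rho e z = 0" by (simp add: rho_def max_def)
qed

definition Sm :: "real \<Rightarrow> oct2 set \<Rightarrow> (oct2 \<Rightarrow> real) \<Rightarrow> oct2 \<Rightarrow> real" where
  "Sm e B g x = integral B (\<lambda>y. g y * rho e (x - y))"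
definition Sm1 :: "real \<Rightarrow> oct2 set \<Rightarrow> (oct2 \<Rightarrow> real) \<Rightarrow> oct2 \<Rightarrow> oct2 \<Rightarrow> real" where
  "Sm1 e B g v x = integral B (\<lambda>y. g y * rho1 e v (x - y))"
definition Sm2 :: "real \<Rightarrow> oct2 set \<Rightarrow> (oct2 \<Rightarrow> real) \<Rightarrow> oct2 \<Rightarrow> oct2 \<Rightarrow> oct2 \<Rightarrow> real" where
  "Sm2 e B g v w x = integral B (\<lambda>y. g y * rho2 e v w (x - y))"

lemma cont_comp_UNIV: "continuous_on UNIV g \<Longrightarrow> continuous_on S f \<Longrightarrow> continuous_on S (\<lambda>x. g (f x))"
  by (rule continuous_on_compose2) auto

lemma Sm_deriv:
  assumes g: "continuous_on UNIV g"
  shows "((\<lambda>t. Sm e (cbox a b) g (x + t *\<^sub>R v)) has_real_derivative Sm1 e (cbox a b) g v (x + t *\<^sub>R v)) (at t)"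
proof -
  have eq: "(\<lambda>t. Sm e (cbox a b) g (x + t *\<^sub>R v)) = (\<lambda>t. integral (cbox a b) (\<lambda>y. g y * rho e ((x - y) + t *\<^sub>R v)))"
    by (simp add: Sm_def algebra_simps)
  have eq2: "Sm1 e (cbox a b) g v (x + t *\<^sub>R v) = integral (cbox a b) (\<lambda>y. g y * rho1 e v ((x - y) + t *\<^sub>R v))"
    by (simp add: Sm1_def algebra_simps)
  have "((\<lambda>t. integral (cbox a b) (\<lambda>y. g y * rho e ((x - y) + t *\<^sub>R v))) has_field_derivative
         integral (cbox a b) (\<lambda>y. g y * rho1 e v ((x - y) + t *\<^sub>R v))) (at t within UNIV)"
  proof (rule leibniz_rule_field_derivative[where fx="\<lambda>t y. g y * rho1 e v ((x - y) + t *\<^sub>R v)"])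
    fix s :: real and y assume "s \<in> UNIV" "y \<in> cbox a b"
    show "((\<lambda>s. g y * rho e ((x - y) + s *\<^sub>R v)) has_field_derivative g y * rho1 e v ((x - y) + s *\<^sub>R v)) (at s within UNIV)"
      using DERIV_cmult[OF DERIV_rho] by simp
  next
    fix s :: real
    show "(\<lambda>y. g y * rho e ((x - y) + s *\<^sub>R v)) integrable_on cbox a b"
      by (intro integrable_continuous continuous_intros cont_comp_UNIV[OF g])
  next
    show "continuous_on (UNIV \<times> cbox a b) (\<lambda>(t, y). g y * rho1 e v ((x - y) + t *\<^sub>R v))"
      unfolding case_prod_beta
      by (intro continuous_intros cont_comp_UNIV[OF g])
  qed auto
  then show ?thesis unfolding eq eq2 by simp
qed

lemma Sm1_deriv:
  assumes g: "continuous_on UNIV g"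
  shows "((\<lambda>t. Sm1 e (cbox a b) g v (x + t *\<^sub>R w)) has_real_derivative Sm2 e (cbox a b) g v w (x + t *\<^sub>R w)) (at t)"
proof -
  have eq: "(\<lambda>t. Sm1 e (cbox a b) g v (x + t *\<^sub>R w)) = (\<lambda>t. integral (cbox a b) (\<lambda>y. g y * rho1 e v ((x - y) + t *\<^sub>R w)))"
    by (simp add: Sm1_def algebra_simps)
  have eq2: "Sm2 e (cbox a b) g v w (x + t *\<^sub>R w) = integral (cbox a b) (\<lambda>y. g y * rho2 e v w ((x - y) + t *\<^sub>R w))"
    by (simp add: Sm2_def algebra_simps)
  have "((\<lambda>t. integral (cbox a b) (\<lambda>y. g y * rho1 e v ((x - y) + t *\<^sub>R w))) has_field_derivative
         integral (cbox a b) (\<lambda>y. g y * rho2 e v w ((x - y) + t *\<^sub>R w))) (at t within UNIV)"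
  proof (rule leibniz_rule_field_derivative[where fx="\<lambda>t y. g y * rho2 e v w ((x - y) + t *\<^sub>R w)"])
    fix s :: real and y assume "s \<in> UNIV" "y \<in> cbox a b"
    show "((\<lambda>s. g y * rho1 e v ((x - y) + s *\<^sub>R w)) has_field_derivative g y * rho2 e v w ((x - y) + s *\<^sub>R w)) (at s within UNIV)"
      using DERIV_cmult[OF DERIV_rho1] by simp
  next
    fix s :: real
    show "(\<lambda>y. g y * rho1 e v ((x - y) + s *\<^sub>R w)) integrable_on cbox a b"
      by (intro integrable_continuous continuous_intros cont_comp_UNIV[OF g])
  next
    show "continuous_on (UNIV \<times> cbox a b) (\<lambda>(t, y). g y * rho2 e v w ((x - y) + t *\<^sub>R w))"
      unfolding case_prod_beta
      by (intro continuous_intros cont_comp_UNIV[OF g])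
  qed auto
  then show ?thesis unfolding eq eq2 by simp
qed

lemma Sm_cont: assumes g: "continuous_on UNIV g" shows "continuous_on S (Sm e (cbox a b) g)"
proof -
  have "continuous_on (UNIV \<times> cbox a b) (\<lambda>(x,y). g y * rho e (x - y))"
    unfolding case_prod_beta by (intro continuous_intros cont_comp_UNIV[OF g])
  then have "continuous_on UNIV (\<lambda>x. integral (cbox a b) (\<lambda>y. g y * rho e (x - y)))"
    by (rule integral_continuous_on_param)
  then show ?thesis unfolding Sm_def by (rule continuous_on_subset) auto
qed

lemma Sm1_cont: assumes g: "continuous_on UNIV g" shows "continuous_on S (Sm1 e (cbox a b) g v)"
proof -
  have "continuous_on (UNIV \<times> cbox a b) (\<lambda>(x,y). g y * rho1 e v (x - y))"
    unfolding case_prod_beta by (intro continuous_intros cont_comp_UNIV[OF g])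
  then have "continuous_on UNIV (\<lambda>x. integral (cbox a b) (\<lambda>y. g y * rho1 e v (x - y)))"
    by (rule integral_continuous_on_param)
  then show ?thesis unfolding Sm1_def by (rule continuous_on_subset) auto
qed

lemma Sm2_cont: assumes g: "continuous_on UNIV g" shows "continuous_on S (Sm2 e (cbox a b) g v w)"
proof -
  have "continuous_on (UNIV \<times> cbox a b) (\<lambda>(x,y). g y * rho2 e v w (x - y))"
    unfolding case_prod_beta by (intro continuous_intros cont_comp_UNIV[OF g])
  then have "continuous_on UNIV (\<lambda>x. integral (cbox a b) (\<lambda>y. g y * rho2 e v w (x - y)))"
    by (rule integral_continuous_on_param)
  then show ?thesis unfolding Sm2_def by (rule continuous_on_subset) auto
qed

lemma pd_Sm: "continuous_on UNIV g \<Longrightarrow> pd (Sm e (cbox a b) g) v = Sm1 e (cbox a b) g v"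
  unfolding pd_def fun_eq_iff using DERIV_imp_deriv[OF Sm_deriv[where g=g and t=0 and v=v]] by simp

lemma pd_Sm1: "continuous_on UNIV g \<Longrightarrow> pd (Sm1 e (cbox a b) g v) w = Sm2 e (cbox a b) g v w"
  unfolding pd_def fun_eq_iff using DERIV_imp_deriv[OF Sm1_deriv[where g=g and t=0 and w=w and v=v]] by simp

lemma pd_pd_Sm: "continuous_on UNIV g \<Longrightarrow> pd (pd (Sm e (cbox a b) g) v) w = Sm2 e (cbox a b) g v w"
  by (simp add: pd_Sm pd_Sm1)

lemma C2_Sm: assumes g: "continuous_on UNIV g" shows "C2_on S (Sm e (cbox a b) g)"
  unfolding C2_on_def pd_Sm[OF g] pd_Sm1[OF g]
  using Sm_cont[OF g] Sm1_cont[OF g] Sm2_cont[OF g] Sm_deriv[OF g, where t=0] Sm1_deriv[OF g, where t=0]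
  by simp

lemma lborel_reflect: "distr lborel borel (\<lambda>y. x - y) = (lborel :: 'a::euclidean_space measure)"
proof -
  have "(lborel :: 'a measure) = density (distr lborel borel (\<lambda>y. x + (-1) *\<^sub>R y)) (\<lambda>_. \<bar>-1::real\<bar>^DIM('a))"
    by (rule lborel_affine) simp
  then show ?thesis by (simp add: density_1)
qed

lemma integral_reflect:
  fixes f :: "'a::euclidean_space \<Rightarrow> real"
  assumes "f \<in> borel_measurable borel"
  shows "(\<integral>y. f y \<partial>lborel) = (\<integral>y. f (x - y) \<partial>lborel)"
proof -
  have "(\<integral>y. f y \<partial>lborel) = (\<integral>y. f y \<partial>(distr lborel borel (\<lambda>y. x - y)))"
    by (simp add: lborel_reflect)
  also have "\<dots> = (\<integral>y. f (x - y) \<partial>lborel)"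
    by (rule integral_distr) (use assms in auto)
  finally show ?thesis .
qed

lemma rho_vanish: assumes "e \<ge> 0" "norm z \<ge> e" shows "rho e z = 0" "rho1 e v z = 0" "rho2 e v w z = 0"
proof -
  have "e^2 \<le> (norm z)^2" using assms by (simp add: power_mono)
  then have "e^2 - z \<bullet> z \<le> 0" by (simp add: power2_norm_eq_inner)
  then show "rho e z = 0" "rho1 e v z = 0" "rho2 e v w z = 0"
    by (simp_all add: rho_def rho1_def rho2_def max_def)
qed

lemma bumpP_nonneg: "bumpP e z \<ge> 0"
  by (simp add: bumpP_def)

lemma cont_bumpP: "continuous_on S (bumpP e)"
  unfolding bumpP_def by (intro continuous_intros)

lemma bumpP_vanish: "e \<ge> 0 \<Longrightarrow> norm z \<ge> e \<Longrightarrow> bumpP e z = 0"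
proof -
  assume "e \<ge> 0" "norm z \<ge> e"
  then have "e^2 \<le> (norm z)^2" by (simp add: power_mono)
  then have "e^2 - z \<bullet> z \<le> 0" by (simp add: power2_norm_eq_inner)
  then show "bumpP e z = 0" by (simp add: bumpP_def max_def)
qed

lemma integrable_vanishing:
  fixes f :: "'a::euclidean_space \<Rightarrow> real"
  assumes "continuous_on UNIV f" "\<And>z. z \<notin> K \<Longrightarrow> f z = 0" "compact K"
  shows "integrable lborel f"
proof -
  have "integrable lborel (\<lambda>x. indicator K x *\<^sub>R f x)"
    by (rule borel_integrable_compact) (use assms continuous_on_subset[OF assms(1)] in auto)
  moreover have "(\<lambda>x. indicator K x *\<^sub>R f x) = f" using assms(2) by (auto simp: fun_eq_iff indicator_def)
  ultimately show ?thesis by simp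
qed

lemma integrable_bumpP: "e \<ge> 0 \<Longrightarrow> integrable lborel (bumpP e)"
  by (rule integrable_vanishing[where K="cball 0 e"]) (auto simp: cont_bumpP intro: bumpP_vanish)

lemma integral_bumpP_pos: assumes "e > 0" shows "(\<integral>z. bumpP e z \<partial>lborel) > 0"
proof -
  define c where "c = (3 * e^2 / 4)^3"
  have c: "c > 0" using assms by (simp add: c_def)
  have le: "indicator (cball 0 (e/2)) z * c \<le> bumpP e z" for z
  proof (cases "z \<in> cball 0 (e/2)")
    case True
    then have "norm z \<le> e/2" by simp
    then have "(norm z)^2 \<le> (e/2)^2" by (simp add: power_mono)
    then have "z \<bullet> z \<le> e^2/4" by (simp add: power2_norm_eq_inner power_divide)
    then have "3 * e^2 / 4 \<le> e^2 - z \<bullet> z" by simp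
    then have "3 * e^2 / 4 \<le> max 0 (e^2 - z \<bullet> z)" by (rule order_trans) simp
    then have "c \<le> (max 0 (e^2 - z \<bullet> z))^3" unfolding c_def by (rule power_mono) simp
    then show ?thesis using True by (simp add: bumpP_def)
  qed (simp add: bumpP_nonneg)
  have "(\<integral>z. indicator (cball 0 (e/2)) (z::oct2) * c \<partial>lborel) \<le> (\<integral>z. bumpP e z \<partial>lborel)"
    by (rule Bochner_Integration.integral_mono) (use le integrable_bumpP assms in \<open>auto intro!: integrable_real_mult_indicator emeasure_compact_finite\<close>)
  moreover have "(\<integral>z. indicator (cball 0 (e/2)) (z::oct2) * c \<partial>lborel) = measure lborel (cball (0::oct2) (e/2)) * c"
    by simp
  moreover have "measure lborel (cball (0::oct2) (e/2)) > 0" using content_cball_pos[of "e/2"] assms by simp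
  ultimately show ?thesis using c by (smt (verit) mult_pos_pos)
qed

lemma rho_eq: "rho e z = bumpc e * bumpP e z"
  by (simp add: rho_def bumpP_def)

lemma bumpc_pos: "e > 0 \<Longrightarrow> bumpc e > 0"
  using integral_bumpP_pos by (simp add: bumpc_def)

lemma rho_nonneg: "e > 0 \<Longrightarrow> rho e z \<ge> 0"
  using bumpc_pos[of e] bumpP_nonneg[of e z] by (simp add: rho_eq)

lemma integrable_rho: "e > 0 \<Longrightarrow> integrable lborel (rho e)"
  unfolding rho_eq[abs_def] using integrable_bumpP by simp

lemma integral_rho: "e > 0 \<Longrightarrow> (\<integral>z. rho e z \<partial>lborel) = 1"
  using integral_bumpP_pos[of e] by (simp add: rho_eq bumpc_def)

lemma Sm_lebesgue:
  assumes g: "continuous_on UNIV g" and e: "e > 0" and sub: "cball x e \<subseteq> cbox a b"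
  shows "Sm e (cbox a b) g x = (\<integral>y. g (x - y) * rho e y \<partial>lborel)"
proof -
  let ?F = "\<lambda>y. g y * rho e (x - y)"
  have cF: "continuous_on UNIV ?F" by (intro continuous_intros cont_comp_UNIV[OF g])
  have si: "set_integrable lborel (cbox a b) ?F"
    unfolding set_integrable_def
    by (rule borel_integrable_compact) (use cF continuous_on_subset in auto)
  have "Sm e (cbox a b) g x = (LINT y:cbox a b|lborel. ?F y)"
    unfolding Sm_def using set_borel_integral_eq_integral(2)[OF si] by simp
  also have "\<dots> = (\<integral>y. ?F y \<partial>lborel)"
    unfolding set_lebesgue_integral_def
  proof (rule Bochner_Integration.integral_cong)
    fix y show "indicator (cbox a b) y *\<^sub>R ?F y = ?F y"
    proof (cases "y \<in> cbox a b")
      case False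
      then have "y \<notin> cball x e" using sub by blast
      then have "norm (x - y) \<ge> e" by (simp add: dist_norm)
      then show ?thesis using e by (simp add: rho_vanish)
    qed simp
  qed simp
  also have "\<dots> = (\<integral>y. ?F (x - y) \<partial>lborel)"
    by (rule integral_reflect) (use cF borel_measurable_continuous_onI in auto)
  finally show ?thesis by simp
qed

lemma integrable_g_rho:
  assumes g: "continuous_on UNIV g" and e: "e > 0"
  shows "integrable lborel (\<lambda>y. g (x - y) * rho e y)"
proof (rule integrable_vanishing[where K="cball 0 e"])
  show "continuous_on UNIV (\<lambda>y. g (x - y) * rho e y)"
    by (intro continuous_intros cont_comp_UNIV[OF g])
  fix z :: oct2 assume "z \<notin> cball 0 e"
  then show "g (x - z) * rho e z = 0" using e by (simp add: rho_vanish)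
qed simp

lemma Sm_bound:
  assumes g: "continuous_on UNIV g" and e: "e > 0" and sub: "cball x e \<subseteq> cbox a b"
    and M: "\<And>y. \<bar>g y\<bar> \<le> M"
  shows "\<bar>Sm e (cbox a b) g x\<bar> \<le> M"
proof -
  have i1: "integrable lborel (\<lambda>y. g (x - y) * rho e y)" by (rule integrable_g_rho[OF g e])
  have i2: "integrable lborel (\<lambda>y. M * rho e y)" using integrable_rho[OF e] by simp
  have i3: "integrable lborel (\<lambda>y. - M * rho e y)" using integrable_rho[OF e] by simp
  have p1: "g (x - y) * rho e y \<le> M * rho e y" for y
    using M[of "x - y"] rho_nonneg[OF e, of y] by (intro mult_right_mono) (auto simp: abs_le_iff)
  have p2: "- M * rho e y \<le> g (x - y) * rho e y" for y
    using M[of "x - y"] rho_nonneg[OF e, of y] by (intro mult_right_mono) (auto simp: abs_le_iff)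
  have "(\<integral>y. g (x - y) * rho e y \<partial>lborel) \<le> (\<integral>y. M * rho e y \<partial>lborel)"
    by (rule Bochner_Integration.integral_mono[OF i1 i2]) (rule p1)
  moreover have "(\<integral>y. - M * rho e y \<partial>lborel) \<le> (\<integral>y. g (x - y) * rho e y \<partial>lborel)"
    by (rule Bochner_Integration.integral_mono[OF i3 i1]) (rule p2)
  ultimately show ?thesis
    using Sm_lebesgue[OF g e sub] integral_rho[OF e] by (simp add: abs_le_iff)
qed

lemma Sm_approx:
  assumes g: "continuous_on UNIV g" and e: "e > 0" and sub: "cball x e \<subseteq> cbox a b"
    and eta: "\<And>y. norm y < e \<Longrightarrow> \<bar>g (x - y) - g x\<bar> \<le> \<eta>"
  shows "\<bar>Sm e (cbox a b) g x - g x\<bar> \<le> \<eta>"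
proof -
  have i1: "integrable lborel (\<lambda>y. (g (x - y) - g x) * rho e y)"
    using integrable_g_rho[OF g e, of x] integrable_rho[OF e]
    by (simp add: left_diff_distrib)
  have i2: "integrable lborel (\<lambda>y. \<eta> * rho e y)" using integrable_rho[OF e] by simp
  have i3: "integrable lborel (\<lambda>y. - \<eta> * rho e y)" using integrable_rho[OF e] by simp
  have pt: "\<bar>(g (x - y) - g x) * rho e y\<bar> \<le> \<eta> * rho e y" for y
  proof (cases "norm y < e")
    case True
    then show ?thesis using eta[OF True] rho_nonneg[OF e, of y]
      by (simp add: abs_mult mult_right_mono)
  next
    case False then show ?thesis using e by (simp add: rho_vanish)
  qed
  have pA: "(g (x - y) - g x) * rho e y \<le> \<eta> * rho e y" for y using abs_le_D1[OF pt[of y]] .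
  have pB: "- \<eta> * rho e y \<le> (g (x - y) - g x) * rho e y" for y using abs_le_D2[OF pt[of y]] by simp
  have "(\<integral>y. (g (x - y) - g x) * rho e y \<partial>lborel) \<le> (\<integral>y. \<eta> * rho e y \<partial>lborel)"
    by (rule Bochner_Integration.integral_mono[OF i1 i2]) (rule pA)
  moreover have "(\<integral>y. - \<eta> * rho e y \<partial>lborel) \<le> (\<integral>y. (g (x - y) - g x) * rho e y \<partial>lborel)"
    by (rule Bochner_Integration.integral_mono[OF i3 i1]) (rule pB)
  moreover have "(\<integral>y. (g (x - y) - g x) * rho e y \<partial>lborel) = Sm e (cbox a b) g x - g x"
  proof -
    have "(\<integral>y. (g (x - y) - g x) * rho e y \<partial>lborel) = (\<integral>y. g (x - y) * rho e y - g x * rho e y \<partial>lborel)"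
      by (simp add: left_diff_distrib)
    also have "\<dots> = (\<integral>y. g (x - y) * rho e y \<partial>lborel) - (\<integral>y. g x * rho e y \<partial>lborel)"
      by (rule Bochner_Integration.integral_diff) (use integrable_g_rho[OF g e] integrable_rho[OF e] in auto)
    also have "\<dots> = Sm e (cbox a b) g x - g x"
      using Sm_lebesgue[OF g e sub] integral_rho[OF e] by simp
    finally show ?thesis .
  qed
  ultimately show ?thesis using integral_rho[OF e] by (simp add: abs_le_iff)
qed

lemma Sm_mean:
  fixes L :: "oct \<Rightarrow> oct2"
  assumes g: "continuous_on UNIV g" and e: "e > 0" and L: "continuous_on UNIV L" and r: "r > 0"
    and cb: "\<And>x. x \<in> cball x0 r \<Longrightarrow> cball (z0 + L x) e \<subseteq> cbox a b"
    and sub: "\<And>y. norm y < e \<Longrightarrow>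
        g (z0 - y + L x0) \<le> (LINT x:cball x0 r|lborel. g (z0 - y + L x)) / measure lborel (cball x0 r)"
  shows "Sm e (cbox a b) g (z0 + L x0) \<le>
           (LINT x:cball x0 r|lborel. Sm e (cbox a b) g (z0 + L x)) / measure lborel (cball x0 r)"
proof -
  define A where "A = cball x0 r"
  define V where "V = measure lborel A"
  define G where "G = (\<lambda>x y. g (z0 - y + L x) * rho e y)"
  define H where "H = (\<lambda>x y. indicator A x * G x y)"
  have cG: "continuous_on UNIV (\<lambda>p. G (fst p) (snd p))"
    unfolding G_def by (intro continuous_intros cont_comp_UNIV[OF g] cont_comp_UNIV[OF L])
  have Gz: "G x y = 0" if "norm y \<ge> e" for x y using that e by (simp add: G_def rho_vanish)
  have intH: "integrable (lborel \<Otimes>\<^sub>M lborel) (case_prod H)"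
  proof -
    have "integrable lborel (\<lambda>p::oct \<times> oct2. indicator (A \<times> cball 0 e) p *\<^sub>R G (fst p) (snd p))"
      by (rule borel_integrable_compact)
         (auto simp: A_def intro!: compact_Times continuous_on_subset[OF cG])
    moreover have "(\<lambda>p::oct \<times> oct2. indicator (A \<times> cball 0 e) p *\<^sub>R G (fst p) (snd p)) = case_prod H"
    proof (rule ext, clarify)
      fix x :: oct and y :: oct2
      show "indicator (A \<times> cball 0 e) (x, y) *\<^sub>R G (fst (x, y)) (snd (x, y)) = H x y"
        unfolding H_def
        by (cases "norm y \<ge> e") (auto simp: indicator_def Gz)
    qed
    ultimately show ?thesis by (simp add: lborel_prod)
  qed
  have intS: "integrable lborel (\<lambda>y. \<integral>x. H x y \<partial>lborel)"
    by (rule lborel_pair.integrable_snd[OF intH])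
  have fub: "(\<integral>y. (\<integral>x. H x y \<partial>lborel) \<partial>lborel) = (\<integral>x. (\<integral>y. H x y \<partial>lborel) \<partial>lborel)"
    by (rule lborel_pair.Fubini_integral[OF intH])
  have SmL: "Sm e (cbox a b) g (z0 + L x) = (\<integral>y. G x y \<partial>lborel)" if "x \<in> A" for x
  proof -
    have "Sm e (cbox a b) g (z0 + L x) = (\<integral>y. g (z0 + L x - y) * rho e y \<partial>lborel)"
      by (rule Sm_lebesgue[OF g e cb]) (use that A_def in simp)
    also have "\<dots> = (\<integral>y. G x y \<partial>lborel)" by (simp add: G_def algebra_simps)
    finally show ?thesis .
  qed
  have x0A: "x0 \<in> A" using r by (simp add: A_def)
  have pt: "G x0 y \<le> (\<integral>x. H x y \<partial>lborel) / V" for y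
  proof (cases "norm y < e")
    case True
    have "G x0 y = g (z0 - y + L x0) * rho e y" by (simp add: G_def)
    also have "\<dots> \<le> ((LINT x:A|lborel. g (z0 - y + L x)) / V) * rho e y"
      using sub[OF True] rho_nonneg[OF e, of y] by (intro mult_right_mono) (simp_all add: A_def V_def)
    also have "\<dots> = (LINT x:A|lborel. g (z0 - y + L x) * rho e y) / V"
      using set_integral_mult_left[of lborel A "\<lambda>x. g (z0 - y + L x)" "rho e y"] by simp
    also have "(LINT x:A|lborel. g (z0 - y + L x) * rho e y) = (\<integral>x. H x y \<partial>lborel)"
      unfolding set_lebesgue_integral_def H_def G_def by simp
    finally show ?thesis .
  next
    case False
    then have "G x0 y = 0" "\<And>x. H x y = 0" using Gz by (auto simp: H_def)
    then show ?thesis by simp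
  qed
  have "Sm e (cbox a b) g (z0 + L x0) = (\<integral>y. G x0 y \<partial>lborel)" by (rule SmL[OF x0A])
  also have "\<dots> \<le> (\<integral>y. (\<integral>x. H x y \<partial>lborel) / V \<partial>lborel)"
  proof (rule Bochner_Integration.integral_mono)
    show "integrable lborel (G x0)"
      unfolding G_def
      by (rule integrable_vanishing[where K="cball 0 e"])
         (use e in \<open>auto simp: rho_vanish intro!: continuous_intros cont_comp_UNIV[OF g]\<close>)
    show "integrable lborel (\<lambda>y. (\<integral>x. H x y \<partial>lborel) / V)"
      using intS by simp
  qed (rule pt)
  also have "\<dots> = (\<integral>x. (\<integral>y. H x y \<partial>lborel) \<partial>lborel) / V"
    using fub by simp
  also have "(\<integral>x. (\<integral>y. H x y \<partial>lborel) \<partial>lborel) = (LINT x:A|lborel. Sm e (cbox a b) g (z0 + L x))"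
    unfolding set_lebesgue_integral_def
  proof (rule Bochner_Integration.integral_cong)
    fix x :: oct
    show "(\<integral>y. H x y \<partial>lborel) = indicator A x *\<^sub>R Sm e (cbox a b) g (z0 + L x)"
      by (cases "x \<in> A") (simp_all add: H_def SmL)
  qed simp
  finally show ?thesis by (simp add: A_def V_def)
qed

lemma Sm_subharmonic_line:
  fixes L :: "oct \<Rightarrow> oct2"
  assumes g: "continuous_on UNIV g" and e: "e > 0" and L: "continuous_on UNIV L"
    and box: "\<And>x. x \<in> W \<Longrightarrow> cball x e \<subseteq> cbox a b"
    and gu: "\<And>x z. x \<in> W \<Longrightarrow> dist x z \<le> e \<Longrightarrow> z \<in> \<Omega> \<and> g z = u z"
    and ush: "\<And>p. subharmonic_on {x. p + L x \<in> \<Omega>} (\<lambda>x. u (p + L x))"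
  shows "subharmonic_on {x. z0 + L x \<in> W} (\<lambda>x. Sm e (cbox a b) g (z0 + L x))"
  unfolding subharmonic_on_def
proof (intro conjI allI impI)
  have cS: "continuous_on UNIV (\<lambda>x. Sm e (cbox a b) g (z0 + L x))"
    by (intro cont_comp_UNIV[OF Sm_cont[OF g]] continuous_intros L)
  show "usc_on {x. z0 + L x \<in> W} (\<lambda>x. Sm e (cbox a b) g (z0 + L x))"
    by (rule continuous_imp_usc) (rule continuous_on_subset[OF cS], simp)
  fix x0 r assume h: "0 < r \<and> cball x0 r \<subseteq> {x. z0 + L x \<in> W}"
  show "set_integrable lborel (cball x0 r) (\<lambda>x. Sm e (cbox a b) g (z0 + L x))"
    unfolding set_integrable_def
    by (rule borel_integrable_compact) (auto intro: continuous_on_subset[OF cS])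
  show "Sm e (cbox a b) g (z0 + L x0) \<le>
      (LINT x:cball x0 r|lborel. Sm e (cbox a b) g (z0 + L x)) / measure lborel (cball x0 r)"
  proof (rule Sm_mean[OF g e L])
    show "0 < r" using h by simp
    fix x assume "x \<in> cball x0 r"
    then have "z0 + L x \<in> W" using h by blast
    then show "cball (z0 + L x) e \<subseteq> cbox a b" by (rule box)
  next
    fix y :: oct2 assume y: "norm y < e"
    have inW: "z0 + L x \<in> W" if "x \<in> cball x0 r" for x using h that by blast
    have pt: "z0 - y + L x \<in> \<Omega> \<and> g (z0 - y + L x) = u (z0 - y + L x)" if "x \<in> cball x0 r" for x
    proof (rule gu[OF inW[OF that]])
      show "dist (z0 + L x) (z0 - y + L x) \<le> e" using y by (simp add: dist_norm)
    qed
    have sub: "cball x0 r \<subseteq> {x. (z0 - y) + L x \<in> \<Omega>}" using pt by auto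
    have x0: "x0 \<in> cball x0 r" using h by simp
    have "u (z0 - y + L x0) \<le> (LINT x:cball x0 r|lborel. u (z0 - y + L x)) / measure lborel (cball x0 r)"
      using ush[of "z0 - y"] sub h unfolding subharmonic_on_def by blast
    moreover have "(LINT x:cball x0 r|lborel. u (z0 - y + L x)) = (LINT x:cball x0 r|lborel. g (z0 - y + L x))"
      by (rule set_lebesgue_integral_cong) (use pt in auto)
    ultimately show "g (z0 - y + L x0) \<le> (LINT x:cball x0 r|lborel. g (z0 - y + L x)) / measure lborel (cball x0 r)"
      using pt[OF x0] by simp
  qed
qed

lemma Sm_COPSH:
  assumes g: "continuous_on UNIV g" and e: "e > 0"
    and box: "\<And>x. x \<in> W \<Longrightarrow> cball x e \<subseteq> cbox a b"
    and gu: "\<And>x z. x \<in> W \<Longrightarrow> dist x z \<le> e \<Longrightarrow> z \<in> \<Omega> \<and> g z = u z"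
    and u: "COPSH \<Omega> u"
  shows "COPSH W (Sm e (cbox a b) g)"
proof -
  have c: "continuous_on W (Sm e (cbox a b) g)" by (rule Sm_cont[OF g])
  have l1: "subharmonic_on {x. z0 + (x, omul a' x) \<in> W} (\<lambda>x. Sm e (cbox a b) g (z0 + (x, omul a' x)))" for z0 a'
  proof (rule Sm_subharmonic_line[OF g e _ box gu, where L="\<lambda>x. (x, omul a' x)"])
    show "continuous_on UNIV (\<lambda>x. (x, omul a' x))" by (intro continuous_intros)
    show "subharmonic_on {x. p + (x, omul a' x) \<in> \<Omega>} (\<lambda>x. u (p + (x, omul a' x)))" for p
      using u unfolding COPSH_def OPSH_def by blast
  qed auto
  have l2: "subharmonic_on {x. z0 + (0, x) \<in> W} (\<lambda>x. Sm e (cbox a b) g (z0 + (0, x)))" for z0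
  proof (rule Sm_subharmonic_line[OF g e _ box gu, where L="\<lambda>x. (0, x)"])
    show "continuous_on UNIV (\<lambda>x::oct. (0::oct, x))" by (intro continuous_intros)
    show "subharmonic_on {x. p + (0, x) \<in> \<Omega>} (\<lambda>x. u (p + (0, x)))" for p
      using u unfolding COPSH_def OPSH_def by blast
  qed auto
  show ?thesis unfolding COPSH_def OPSH_def using c continuous_imp_usc[OF c] l1 l2 by blast
qed

lemma Sm_scale: "Sm e B (\<lambda>y. t * g y) = (\<lambda>x. t * Sm e B g x)"
proof
  fix x
  have "integral B (\<lambda>y. t * g y * rho e (x - y)) = integral B (\<lambda>y. t *\<^sub>R (g y * rho e (x - y)))"
    by (simp add: mult.assoc)
  then show "Sm e B (\<lambda>y. t * g y) x = t * Sm e B g x" unfolding Sm_def by simp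
qed

lemma Sm2_scale: "Sm2 e B (\<lambda>y. t * g y) v w x = t * Sm2 e B g v w x"
proof -
  have "integral B (\<lambda>y. t * g y * rho2 e v w (x - y)) = integral B (\<lambda>y. t *\<^sub>R (g y * rho2 e v w (x - y)))"
    by (simp add: mult.assoc)
  then show ?thesis unfolding Sm2_def by simp
qed
lemma oHess_Sm: "continuous_on UNIV g \<Longrightarrow> oHess (Sm e (cbox a b) g) x \<alpha> \<beta> = (\<Sum>p\<in>Basis. omul p (\<Sum>q\<in>Basis. Sm2 e (cbox a b) g (odir \<beta> q) (odir \<alpha> p) x *\<^sub>R oconj q))"
  unfolding oHess_def by (simp add: pd_pd_Sm)
lemma i: "(\<Sum>q\<in>Basis. (t * F q) *\<^sub>R oconj q) = t *\<^sub>R (\<Sum>q\<in>Basis. F q *\<^sub>R (oconj q::oct))" for F :: "oct \<Rightarrow> real"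
      by (simp add: scaleR_sum_right)
lemma oHess_Sm_scale:
  assumes g: "continuous_on UNIV g"
  shows "oHess (Sm e (cbox a b) (\<lambda>y. t * g y)) x \<alpha> \<beta> = t *\<^sub>R oHess (Sm e (cbox a b) g) x \<alpha> \<beta>"
proof -
  have g': "continuous_on UNIV (\<lambda>y. t * g y)" using g by (intro continuous_intros)
  have "oHess (Sm e (cbox a b) (\<lambda>y. t * g y)) x \<alpha> \<beta> = (\<Sum>p\<in>Basis. omul p (\<Sum>q\<in>Basis. Sm2 e (cbox a b) (\<lambda>y. t * g y) (odir \<beta> q) (odir \<alpha> p) x *\<^sub>R oconj q))"
    by (rule oHess_Sm[OF g'])
  also have "\<dots> = (\<Sum>p\<in>Basis. omul p (\<Sum>q\<in>Basis. (t * Sm2 e (cbox a b) g (odir \<beta> q) (odir \<alpha> p) x) *\<^sub>R oconj q))"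
    by (simp only: Sm2_scale)
  also have "\<dots> = (\<Sum>p\<in>Basis. omul p (t *\<^sub>R (\<Sum>q\<in>Basis. Sm2 e (cbox a b) g (odir \<beta> q) (odir \<alpha> p) x *\<^sub>R oconj q)))"
    by (simp only: i)
  also have "\<dots> = t *\<^sub>R (\<Sum>p\<in>Basis. omul p (\<Sum>q\<in>Basis. Sm2 e (cbox a b) g (odir \<beta> q) (odir \<alpha> p) x *\<^sub>R oconj q))"
    by (simp only: omul_scaleR_right scaleR_sum_right[symmetric])
  also have "\<dots> = t *\<^sub>R oHess (Sm e (cbox a b) g) x \<alpha> \<beta>"
    by (simp only: oHess_Sm[OF g])
  finally show ?thesis .
qed

lemma cont_odet_Sm:
  assumes g: "continuous_on UNIV g" and h: "continuous_on UNIV h"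
  shows "continuous_on S (\<lambda>x. odet (oHess (Sm e (cbox a b) g) x) (oHess (Sm e (cbox a b) h) x))"
  unfolding odet_def oHess_Sm[OF g] oHess_Sm[OF h]
  by (intro continuous_intros Sm2_cont[OF g] Sm2_cont[OF h])

lemma nn_formula:
  fixes \<mu> :: "oct2 measure" and \<phi> f :: "oct2 \<Rightarrow> real"
  assumes sets: "sets \<mu> = sets borel" and W: "open W" and f: "continuous_on W f"
    and dens: "\<And>A. A \<in> sets borel \<Longrightarrow> A \<subseteq> W \<Longrightarrow> emeasure \<mu> A = (\<integral>\<^sup>+x\<in>A. ennreal (f x) \<partial>lborel)"
    and \<phi>: "\<phi> \<in> borel_measurable borel" and supp: "\<And>x. \<phi> x \<noteq> 0 \<Longrightarrow> x \<in> W"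
  shows "(\<integral>\<^sup>+x. ennreal (\<phi> x) \<partial>\<mu>) = (\<integral>\<^sup>+x. ennreal (\<phi> x) * (indicator W x * ennreal (f x)) \<partial>lborel)"
proof -
  have Wb: "W \<in> sets borel" using W by simp
  have hm0: "(\<lambda>x. indicator W x *\<^sub>R f x) \<in> borel_measurable borel"
    by (rule borel_measurable_continuous_on_indicator[OF Wb f])
  have heq: "(\<lambda>x. indicator W x * ennreal (f x)) = (\<lambda>x. ennreal (indicator W x *\<^sub>R f x))"
    by (auto simp: fun_eq_iff indicator_def)
  have hm: "(\<lambda>x. indicator W x * ennreal (f x)) \<in> borel_measurable borel"
    unfolding heq using hm0 by measurable
  have \<phi>m: "(\<lambda>x. ennreal (\<phi> x)) \<in> borel_measurable borel" using \<phi> by measurable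
  have "(\<integral>\<^sup>+x. ennreal (\<phi> x) \<partial>\<mu>) = (\<integral>\<^sup>+x. indicator W x * ennreal (\<phi> x) \<partial>\<mu>)"
  proof (rule nn_integral_cong)
    fix x show "ennreal (\<phi> x) = indicator W x * ennreal (\<phi> x)"
      using supp[of x] by (cases "\<phi> x = 0") auto
  qed
  also have "\<dots> = (\<integral>\<^sup>+x. ennreal (\<phi> x) \<partial>density \<mu> (indicator W))"
    by (rule nn_integral_density[symmetric]) (use sets Wb \<phi>m in \<open>simp_all add: measurable_cong_sets[OF sets refl]\<close>)
  also have "density \<mu> (indicator W) = density lborel (\<lambda>x. indicator W x * ennreal (f x))"
  proof (rule measure_eqI)
    show "sets (density \<mu> (indicator W)) = sets (density lborel (\<lambda>x. indicator W x * ennreal (f x)))"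
      using sets by simp
    fix A assume "A \<in> sets (density \<mu> (indicator W))"
    then have A: "A \<in> sets borel" using sets by simp
    have "emeasure (density \<mu> (indicator W)) A = emeasure \<mu> (W \<inter> A)"
      by (rule emeasure_restricted) (use sets Wb A in auto)
    also have "\<dots> = (\<integral>\<^sup>+x\<in>W \<inter> A. ennreal (f x) \<partial>lborel)"
      by (rule dens) (use Wb A in auto)
    also have "\<dots> = (\<integral>\<^sup>+x. indicator W x * ennreal (f x) * indicator A x \<partial>lborel)"
      by (rule nn_integral_cong) (auto simp: indicator_def)
    also have "\<dots> = emeasure (density lborel (\<lambda>x. indicator W x * ennreal (f x))) A"
      by (rule emeasure_density[symmetric]) (use hm A in auto)
    finally show "emeasure (density \<mu> (indicator W)) A = emeasure (density lborel (\<lambda>x. indicator W x * ennreal (f x))) A" .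
  qed
  also have "(\<integral>\<^sup>+x. ennreal (\<phi> x) \<partial>density lborel (\<lambda>x. indicator W x * ennreal (f x))) =
      (\<integral>\<^sup>+x. (indicator W x * ennreal (f x)) * ennreal (\<phi> x) \<partial>lborel)"
    by (rule nn_integral_density) (use hm \<phi>m in auto)
  finally show ?thesis by (simp add: mult.commute mult.left_commute)
qed

lemma MA_parts:
  assumes "is_mixed_oct_MA MA"
  shows MA_1: "\<And>U u v. open U \<Longrightarrow> COPSH U u \<Longrightarrow> COPSH U v \<Longrightarrow> sets (MA U u v) = sets borel"
    and MA_1b: "\<And>U u v K. open U \<Longrightarrow> COPSH U u \<Longrightarrow> COPSH U v \<Longrightarrow> compact K \<Longrightarrow> K \<subseteq> U \<Longrightarrow> emeasure (MA U u v) K < \<infinity>"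
    and MA_2: "\<And>U u v A. open U \<Longrightarrow> COPSH U u \<Longrightarrow> COPSH U v \<Longrightarrow> C2_on U u \<Longrightarrow> C2_on U v \<Longrightarrow>
        A \<in> sets borel \<Longrightarrow> A \<subseteq> U \<Longrightarrow> emeasure (MA U u v) A = (\<integral>\<^sup>+ x\<in>A. ennreal (odet (oHess u x) (oHess v x)) \<partial>lborel)"
    and MA_3: "\<And>U W u v u' v' A. open U \<Longrightarrow> open W \<Longrightarrow> W \<subseteq> U \<Longrightarrow> COPSH U u \<Longrightarrow> COPSH U v \<Longrightarrow>
        COPSH W u' \<Longrightarrow> COPSH W v' \<Longrightarrow> (\<forall>x\<in>W. u' x = u x \<and> v' x = v x) \<Longrightarrow>
        A \<in> sets borel \<Longrightarrow> A \<subseteq> W \<Longrightarrow> emeasure (MA W u' v') A = emeasure (MA U u v) A"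
    and MA_4: "\<And>U us vs u v \<phi>. open U \<Longrightarrow> (\<forall>j. COPSH U (us j) \<and> COPSH U (vs j)) \<Longrightarrow> COPSH U u \<Longrightarrow> COPSH U v \<Longrightarrow>
        (\<forall>K. compact K \<and> K \<subseteq> U \<longrightarrow> uniform_limit K us u sequentially \<and> uniform_limit K vs v sequentially) \<Longrightarrow>
        continuous_on UNIV (\<phi>::oct2\<Rightarrow>real) \<Longrightarrow> compact (closure {x. \<phi> x \<noteq> 0}) \<Longrightarrow> closure {x. \<phi> x \<noteq> 0} \<subseteq> U \<Longrightarrow>
        (\<lambda>j. \<integral>x. \<phi> x \<partial>MA U (us j) (vs j)) \<longlonglongrightarrow> (\<integral>x. \<phi> x \<partial>MA U u v)"
proof -
  note D = assms[unfolded is_mixed_oct_MA_def]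
  note D1 = conjunct1[OF D] and D2 = conjunct1[OF conjunct2[OF D]]
    and D3 = conjunct1[OF conjunct2[OF conjunct2[OF D]]] and D4 = conjunct2[OF conjunct2[OF conjunct2[OF D]]]
  show "\<And>U u v. open U \<Longrightarrow> COPSH U u \<Longrightarrow> COPSH U v \<Longrightarrow> sets (MA U u v) = sets borel"
    using D1 by blast
  show "\<And>U u v K. open U \<Longrightarrow> COPSH U u \<Longrightarrow> COPSH U v \<Longrightarrow> compact K \<Longrightarrow> K \<subseteq> U \<Longrightarrow> emeasure (MA U u v) K < \<infinity>"
    using D1 by blast
  show "\<And>U u v A. open U \<Longrightarrow> COPSH U u \<Longrightarrow> COPSH U v \<Longrightarrow> C2_on U u \<Longrightarrow> C2_on U v \<Longrightarrow>
        A \<in> sets borel \<Longrightarrow> A \<subseteq> U \<Longrightarrow> emeasure (MA U u v) A = (\<integral>\<^sup>+ x\<in>A. ennreal (odet (oHess u x) (oHess v x)) \<partial>lborel)"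
    using D2 by blast
  show "\<And>U W u v u' v' A. open U \<Longrightarrow> open W \<Longrightarrow> W \<subseteq> U \<Longrightarrow> COPSH U u \<Longrightarrow> COPSH U v \<Longrightarrow>
        COPSH W u' \<Longrightarrow> COPSH W v' \<Longrightarrow> (\<forall>x\<in>W. u' x = u x \<and> v' x = v x) \<Longrightarrow>
        A \<in> sets borel \<Longrightarrow> A \<subseteq> W \<Longrightarrow> emeasure (MA W u' v') A = emeasure (MA U u v) A"
    using D3 by blast
  show "\<And>U us vs u v \<phi>. open U \<Longrightarrow> (\<forall>j. COPSH U (us j) \<and> COPSH U (vs j)) \<Longrightarrow> COPSH U u \<Longrightarrow> COPSH U v \<Longrightarrow>
        (\<forall>K. compact K \<and> K \<subseteq> U \<longrightarrow> uniform_limit K us u sequentially \<and> uniform_limit K vs v sequentially) \<Longrightarrow>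
        continuous_on UNIV (\<phi>::oct2\<Rightarrow>real) \<Longrightarrow> compact (closure {x. \<phi> x \<noteq> 0}) \<Longrightarrow> closure {x. \<phi> x \<noteq> 0} \<subseteq> U \<Longrightarrow>
        (\<lambda>j. \<integral>x. \<phi> x \<partial>MA U (us j) (vs j)) \<longlonglongrightarrow> (\<integral>x. \<phi> x \<partial>MA U u v)"
  proof -
    fix U and us vs :: "nat \<Rightarrow> oct2 \<Rightarrow> real" and u v and \<phi> :: "oct2 \<Rightarrow> real"
    assume a: "open U" "\<forall>j. COPSH U (us j) \<and> COPSH U (vs j)" "COPSH U u" "COPSH U v"
      "\<forall>K. compact K \<and> K \<subseteq> U \<longrightarrow> uniform_limit K us u sequentially \<and> uniform_limit K vs v sequentially"
      "continuous_on UNIV \<phi>" "compact (closure {x. \<phi> x \<noteq> 0})" "closure {x. \<phi> x \<noteq> 0} \<subseteq> U"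
    note X = D4[THEN spec[of _ U], THEN spec[of _ us], THEN spec[of _ vs], THEN spec[of _ u], THEN spec[of _ v]]
    have Y: "\<forall>\<phi>::oct2 \<Rightarrow> real. continuous_on UNIV \<phi> \<and> compact (closure {x. \<phi> x \<noteq> 0}) \<and>
                closure {x. \<phi> x \<noteq> 0} \<subseteq> U \<longrightarrow>
              (\<lambda>j. \<integral>x. \<phi> x \<partial>MA U (us j) (vs j)) \<longlonglongrightarrow> (\<integral>x. \<phi> x \<partial>MA U u v)"
      by (rule mp[OF X]) (intro conjI a(1-5))
    show "(\<lambda>j. \<integral>x. \<phi> x \<partial>MA U (us j) (vs j)) \<longlonglongrightarrow> (\<integral>x. \<phi> x \<partial>MA U u v)"
      by (rule mp[OF spec[OF Y, of \<phi>]]) (intro conjI a(6-8))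
  qed
qed

lemma I_formula:
  assumes MA: "is_mixed_oct_MA MA" and W: "open W"
    and u: "COPSH W u" and v: "COPSH W v" and u2: "C2_on W u" and v2: "C2_on W v"
    and f: "continuous_on W (\<lambda>x. odet (oHess u x) (oHess v x))"
    and \<phi>: "continuous_on UNIV \<phi>" and \<phi>0: "\<And>x. \<phi> x \<ge> 0" and supp: "\<And>x. \<phi> x \<noteq> 0 \<Longrightarrow> x \<in> W"
  shows "(\<integral>x. \<phi> x \<partial>MA W u v) =
    enn2real (\<integral>\<^sup>+x. ennreal (\<phi> x) * (indicator W x * ennreal (odet (oHess u x) (oHess v x))) \<partial>lborel)"
proof -
  have sets: "sets (MA W u v) = sets borel" using MA_1[OF MA W u v] .
  have dens: "\<And>A. A \<in> sets borel \<Longrightarrow> A \<subseteq> W \<Longrightarrow> emeasure (MA W u v) A =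
      (\<integral>\<^sup>+x\<in>A. ennreal (odet (oHess u x) (oHess v x)) \<partial>lborel)"
    using MA_2[OF MA W u v u2 v2] by blast
  have \<phi>m: "\<phi> \<in> borel_measurable borel" using \<phi> by (rule borel_measurable_continuous_onI)
  have "(\<integral>x. \<phi> x \<partial>MA W u v) = enn2real (\<integral>\<^sup>+x. ennreal (\<phi> x) \<partial>MA W u v)"
    by (rule integral_eq_nn_integral) (use \<phi>m \<phi>0 sets in \<open>auto simp: measurable_cong_sets[OF sets refl]\<close>)
  also have "(\<integral>\<^sup>+x. ennreal (\<phi> x) \<partial>MA W u v) =
     (\<integral>\<^sup>+x. ennreal (\<phi> x) * (indicator W x * ennreal (odet (oHess u x) (oHess v x))) \<partial>lborel)"
    by (rule nn_formula[OF sets W f dens \<phi>m supp])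
  finally show ?thesis .
qed

lemma I_Sm_scale:
  assumes MA: "is_mixed_oct_MA MA" and W: "open W"
    and g: "continuous_on UNIV g" and h: "continuous_on UNIV h"
    and u: "COPSH W (Sm e (cbox a b) g)" and v: "COPSH W (Sm e (cbox a b) h)"
    and \<phi>: "continuous_on UNIV \<phi>" and \<phi>0: "\<And>x. \<phi> x \<ge> 0" and supp: "\<And>x. \<phi> x \<noteq> 0 \<Longrightarrow> x \<in> W"
    and t: "t \<ge> 0"
  shows "(\<integral>x. \<phi> x \<partial>MA W (Sm e (cbox a b) (\<lambda>y. t * g y)) (Sm e (cbox a b) (\<lambda>y. t * h y))) =
         t^2 * (\<integral>x. \<phi> x \<partial>MA W (Sm e (cbox a b) g) (Sm e (cbox a b) h))"
proof -
  have g': "continuous_on UNIV (\<lambda>y. t * g y)" using g by (intro continuous_intros)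
  have h': "continuous_on UNIV (\<lambda>y. t * h y)" using h by (intro continuous_intros)
  have u': "COPSH W (Sm e (cbox a b) (\<lambda>y. t * g y))" unfolding Sm_scale by (rule COPSH_scale[OF u t])
  have v': "COPSH W (Sm e (cbox a b) (\<lambda>y. t * h y))" unfolding Sm_scale by (rule COPSH_scale[OF v t])
  have od: "odet (oHess (Sm e (cbox a b) (\<lambda>y. t * g y)) x) (oHess (Sm e (cbox a b) (\<lambda>y. t * h y)) x) =
        t^2 * odet (oHess (Sm e (cbox a b) g) x) (oHess (Sm e (cbox a b) h) x)" for x
  proof -
    have "oHess (Sm e (cbox a b) (\<lambda>y. t * g y)) x = (\<lambda>\<alpha> \<beta>. t *\<^sub>R oHess (Sm e (cbox a b) g) x \<alpha> \<beta>)"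
      using oHess_Sm_scale[OF g] by blast
    moreover have "oHess (Sm e (cbox a b) (\<lambda>y. t * h y)) x = (\<lambda>\<alpha> \<beta>. t *\<^sub>R oHess (Sm e (cbox a b) h) x \<alpha> \<beta>)"
      using oHess_Sm_scale[OF h] by blast
    ultimately show ?thesis by (simp add: odet_scale)
  qed
  have "(\<integral>x. \<phi> x \<partial>MA W (Sm e (cbox a b) (\<lambda>y. t * g y)) (Sm e (cbox a b) (\<lambda>y. t * h y))) =
    enn2real (\<integral>\<^sup>+x. ennreal (\<phi> x) * (indicator W x * ennreal (odet (oHess (Sm e (cbox a b) (\<lambda>y. t * g y)) x) (oHess (Sm e (cbox a b) (\<lambda>y. t * h y)) x))) \<partial>lborel)"
    by (rule I_formula[OF MA W u' v' C2_Sm[OF g'] C2_Sm[OF h'] cont_odet_Sm[OF g' h'] \<phi> \<phi>0 supp])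
  also have "(\<integral>\<^sup>+x. ennreal (\<phi> x) * (indicator W x * ennreal (odet (oHess (Sm e (cbox a b) (\<lambda>y. t * g y)) x) (oHess (Sm e (cbox a b) (\<lambda>y. t * h y)) x))) \<partial>lborel)
     = (\<integral>\<^sup>+x. ennreal (t^2) * (ennreal (\<phi> x) * (indicator W x * ennreal (odet (oHess (Sm e (cbox a b) g) x) (oHess (Sm e (cbox a b) h) x)))) \<partial>lborel)"
    unfolding od by (rule nn_integral_cong) (simp add: ennreal_mult' mult.left_commute)
  also have "\<dots> = ennreal (t^2) * (\<integral>\<^sup>+x. ennreal (\<phi> x) * (indicator W x * ennreal (odet (oHess (Sm e (cbox a b) g) x) (oHess (Sm e (cbox a b) h) x))) \<partial>lborel)"
  proof (rule nn_integral_cmult)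
    have \<phi>m: "\<phi> \<in> borel_measurable borel" using \<phi> by (rule borel_measurable_continuous_onI)
    have fm: "(\<lambda>x. odet (oHess (Sm e (cbox a b) g) x) (oHess (Sm e (cbox a b) h) x)) \<in> borel_measurable borel"
      by (rule borel_measurable_continuous_onI) (rule cont_odet_Sm[OF g h])
    show "(\<lambda>x. ennreal (\<phi> x) * (indicator W x * ennreal (odet (oHess (Sm e (cbox a b) g) x) (oHess (Sm e (cbox a b) h) x)))) \<in> borel_measurable lborel"
      using W by (intro borel_measurable_times_ennreal borel_measurable_indicator measurable_compose[OF _ measurable_ennreal]) (simp_all add: \<phi>m fm measurable_lborel1)
  qed
  also have "enn2real \<dots> = t^2 * enn2real (\<integral>\<^sup>+x. ennreal (\<phi> x) * (indicator W x * ennreal (odet (oHess (Sm e (cbox a b) g) x) (oHess (Sm e (cbox a b) h) x))) \<partial>lborel)"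
    by (simp add: enn2real_mult)
  also have "enn2real (\<integral>\<^sup>+x. ennreal (\<phi> x) * (indicator W x * ennreal (odet (oHess (Sm e (cbox a b) g) x) (oHess (Sm e (cbox a b) h) x))) \<partial>lborel)
     = (\<integral>x. \<phi> x \<partial>MA W (Sm e (cbox a b) g) (Sm e (cbox a b) h))"
    by (rule I_formula[OF MA W u v C2_Sm[OF g] C2_Sm[OF h] cont_odet_Sm[OF g h] \<phi> \<phi>0 supp, symmetric])
  finally show ?thesis .
qed

lemma Sm_unif:
  assumes g: "continuous_on UNIV g" and d0: "\<delta> > 0"
    and box: "\<And>x e. x \<in> W \<Longrightarrow> 0 < e \<Longrightarrow> e \<le> \<delta> \<Longrightarrow> cball x e \<subseteq> cbox a b"
    and Q: "compact Q" and inQ: "\<And>x z. x \<in> W \<Longrightarrow> dist x z \<le> \<delta> \<Longrightarrow> z \<in> Q"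
    and gu: "\<And>x. x \<in> W \<Longrightarrow> g x = u x"
  shows "uniform_limit W (\<lambda>k. Sm (\<delta> / (real k + 1)) (cbox a b) g) u sequentially"
proof (rule uniform_limitI)
  fix \<eta> :: real assume \<eta>: "\<eta> > 0"
  have uc: "uniformly_continuous_on Q g"
    by (rule compact_uniformly_continuous[OF continuous_on_subset[OF g] Q]) simp
  have h: "\<eta>/2 > 0" using \<eta> by simp
  obtain d where d: "d > 0" "\<And>x x'. x \<in> Q \<Longrightarrow> x' \<in> Q \<Longrightarrow> dist x' x < d \<Longrightarrow> dist (g x') (g x) < \<eta>/2"
    using uniformly_continuous_onE[OF uc h] by blast
  obtain N :: nat where N: "\<delta> / d < real N" using reals_Archimedean2 by blast
  show "\<forall>\<^sub>F k in sequentially. \<forall>x\<in>W. dist (Sm (\<delta> / (real k + 1)) (cbox a b) g x) (u x) < \<eta>"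
    unfolding eventually_sequentially
  proof (intro exI allI impI ballI)
    fix k x assume k: "N \<le> k" and x: "x \<in> W"
    define e where "e = \<delta> / (real k + 1)"
    have e0: "e > 0" using d0 by (simp add: e_def)
    have "\<delta> / (real k + 1) \<le> \<delta> / 1" by (rule divide_left_mono) (use d0 in auto)
    then have eD: "e \<le> \<delta>" by (simp add: e_def)
    have "\<delta> < real N * d" using N d(1) by (simp add: pos_divide_less_eq)
    also have "\<dots> \<le> (real k + 1) * d" using k d(1) by (intro mult_right_mono) auto
    finally have "\<delta> < (real k + 1) * d" .
    then have ed: "e < d" unfolding e_def by (simp add: pos_divide_less_eq mult.commute)
    have "\<bar>Sm e (cbox a b) g x - g x\<bar> \<le> \<eta>/2"
    proof (rule Sm_approx[OF g e0 box[OF x e0 eD]])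
      fix y :: oct2 assume y: "norm y < e"
      have xQ: "x \<in> Q" using inQ[OF x, of x] d0 by simp
      have yQ: "x - y \<in> Q" using inQ[OF x, of "x - y"] y eD by (simp add: dist_norm)
      have "dist (g (x - y)) (g x) < \<eta>/2" using d(2)[OF xQ yQ] y ed by (simp add: dist_norm)
      then show "\<bar>g (x - y) - g x\<bar> \<le> \<eta>/2" by (simp add: dist_real_def)
    qed
    then show "dist (Sm (\<delta> / (real k + 1)) (cbox a b) g x) (u x) < \<eta>"
      using gu[OF x] \<eta> by (simp add: e_def dist_real_def)
  qed
qed

lemma exists_ext:
  fixes u :: "oct2 \<Rightarrow> real"
  assumes c: "continuous_on C u" and cl: "closed C" and M: "M \<ge> 0" and b: "\<And>x. x \<in> C \<Longrightarrow> \<bar>u x\<bar> \<le> M"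
  obtains g where "continuous_on UNIV g" "\<And>y. \<bar>g y\<bar> \<le> M" "\<And>z. z \<in> C \<Longrightarrow> g z = u z"
proof -
  have cl': "closedin (top_of_set UNIV) C" using cl closed_closedin by (metis subtopology_UNIV)
  have b': "\<And>x. x \<in> C \<Longrightarrow> norm (u x) \<le> M" using b by simp
  obtain g where g: "continuous_on UNIV g" "\<And>x. x \<in> C \<Longrightarrow> g x = u x" "\<And>x. x \<in> UNIV \<Longrightarrow> norm (g x) \<le> M"
    using Tietze[OF c cl' M b'] by blast
  show ?thesis by (rule that[OF g(1) _ g(2)]) (use g(3) in simp)
qed

theorem corollary4p2:
  fixes MA :: "oct2 set \<Rightarrow> (oct2 \<Rightarrow> real) \<Rightarrow> (oct2 \<Rightarrow> real) \<Rightarrow> oct2 measure"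
    and \<Omega> :: "oct2 set" and M :: real
  assumes "is_mixed_oct_MA MA"
    and "open \<Omega>" and "M > 0"
  shows "\<forall>K. compact K \<and> K \<subseteq> \<Omega> \<longrightarrow>
           (\<exists>C::real. \<forall>u v. COPSH \<Omega> u \<and> (\<forall>x\<in>\<Omega>. \<bar>u x\<bar> \<le> M) \<and>
                              COPSH \<Omega> v \<and> (\<forall>x\<in>\<Omega>. \<bar>v x\<bar> \<le> M) \<longrightarrow>
                              emeasure (MA \<Omega> u v) K \<le> ennreal C)"
proof (intro allI impI)
  fix K assume KK: "compact K \<and> K \<subseteq> \<Omega>"
  then have Kc: "compact K" and KO: "K \<subseteq> \<Omega>" by auto
  note MA = assms(1) and Oo = assms(2) and M0 = assms(3)
  show "\<exists>C::real. \<forall>u v. COPSH \<Omega> u \<and> (\<forall>x\<in>\<Omega>. \<bar>u x\<bar> \<le> M) \<and>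
                              COPSH \<Omega> v \<and> (\<forall>x\<in>\<Omega>. \<bar>v x\<bar> \<le> M) \<longrightarrow>
                              emeasure (MA \<Omega> u v) K \<le> ennreal C"
  proof (cases "K = {}")
    case True
    show ?thesis by (rule exI[of _ 0]) (simp add: True)
  next
    case Kne: False
    obtain \<epsilon> where \<epsilon>: "\<epsilon> > 0" "(\<Union>x\<in>K. ball x \<epsilon>) \<subseteq> \<Omega>"
      using compact_subset_open_imp_ball_epsilon_subset[OF Kc Oo KO] by blast
    define \<delta> where "\<delta> = \<epsilon> / 4"
    have \<delta>0: "\<delta> > 0" using \<epsilon> by (simp add: \<delta>_def)
    have Kcl: "closed K" using Kc by (rule compact_imp_closed)
    have N\<Omega>: "z \<in> \<Omega>" if "infdist z K \<le> 3 * \<delta>" for z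
    proof -
      obtain y where y: "y \<in> K" "infdist z K = dist z y" using infdist_attains_inf[OF Kcl Kne] by blast
      have "dist y z < \<epsilon>" using that y \<epsilon>(1) by (simp add: \<delta>_def dist_commute)
      then have "z \<in> ball y \<epsilon>" by simp
      then show ?thesis using \<epsilon>(2) y(1) by blast
    qed
    have cN: "compact {x. infdist x K \<le> r}" if "r > 0" for r using compact_infdist_le[OF Kne Kc that] .
    define W where "W = {x. infdist x K < \<delta>}"
    have Wo: "open W" unfolding W_def by (rule open_Collect_less) (intro continuous_intros)+
    have KW: "K \<subseteq> W" using \<delta>0 by (auto simp: W_def)
    have WO: "W \<subseteq> \<Omega>"
    proof
      fix x assume "x \<in> W"
      then have "infdist x K \<le> 3 * \<delta>" using \<delta>0 by (simp add: W_def)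
      then show "x \<in> \<Omega>" by (rule N\<Omega>)
    qed
    have near: "infdist z K \<le> 2 * \<delta>" if "x \<in> W" "dist x z \<le> \<delta>" for x z
      using infdist_triangle[of z K x] that by (simp add: W_def dist_commute)
    have bd: "bounded {x. infdist x K \<le> 2 * \<delta>}" using \<delta>0 by (intro compact_imp_bounded cN) simp
    obtain a0 where a0: "{x. infdist x K \<le> 2 * \<delta>} \<subseteq> cbox (-a0) a0"
      by (rule bounded_subset_cbox_symmetric[OF bd])
    have box: "cball x e \<subseteq> cbox (-a0) a0" if "x \<in> W" "0 < e" "e \<le> \<delta>" for x e
    proof
      fix z assume "z \<in> cball x e"
      then have "dist x z \<le> \<delta>" using that by simp
      then show "z \<in> cbox (-a0) a0" using near[OF that(1)] a0 by blast
    qed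
    define es where "es k = \<delta> / (real k + 1)" for k :: nat
    have es0: "es k > 0" for k using \<delta>0 by (simp add: es_def)
    have esD: "es k \<le> \<delta>" for k
    proof -
      have "\<delta> / (real k + 1) \<le> \<delta> / 1" by (rule divide_left_mono) (use \<delta>0 in auto)
      then show ?thesis by (simp add: es_def)
    qed
    define Q where "Q = {x. infdist x K \<le> 3 * \<delta>}"
    have Qc: "compact Q" unfolding Q_def using \<delta>0 by (intro cN) simp
    have QO: "Q \<subseteq> \<Omega>" using N\<Omega> by (auto simp: Q_def)
    have inQ: "z \<in> Q" if "x \<in> W" "dist x z \<le> \<delta>" for x z
      using near[OF that] \<delta>0 by (simp add: Q_def)
    define \<phi> where "\<phi> x = max 0 (1 - 2 * infdist x K / \<delta>)" for x
    have \<phi>c: "continuous_on UNIV \<phi>" unfolding \<phi>_def by (intro continuous_intros) (use \<delta>0 in simp)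
    have \<phi>0: "\<phi> x \<ge> 0" for x by (simp add: \<phi>_def)
    have \<phi>1: "\<phi> x = 1" if "x \<in> K" for x using that by (simp add: \<phi>_def)
    have \<phi>le: "\<phi> x \<le> 1" for x using \<delta>0 infdist_nonneg[of x K] by (simp add: \<phi>_def)
    have \<phi>nz: "infdist x K \<le> \<delta> / 2" if "\<phi> x \<noteq> 0" for x
    proof -
      have "0 < 1 - 2 * infdist x K / \<delta>"
      proof (rule ccontr)
        assume "\<not> 0 < 1 - 2 * infdist x K / \<delta>"
        then have "\<phi> x = 0" unfolding \<phi>_def by linarith
        with that show False by simp
      qed
      then have "2 * infdist x K / \<delta> < 1" by simp
      then have "2 * infdist x K < \<delta>" using \<delta>0 by (simp add: divide_less_eq)
      then show ?thesis by simp
    qed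
    define S where "S = closure {x. \<phi> x \<noteq> 0}"
    have clh: "closed {x. infdist x K \<le> \<delta> / 2}" using \<delta>0 by (intro compact_imp_closed cN) simp
    have Ssub: "S \<subseteq> {x. infdist x K \<le> \<delta> / 2}"
      unfolding S_def
    proof (rule closure_minimal[OF _ clh])
      show "{x. \<phi> x \<noteq> 0} \<subseteq> {x. infdist x K \<le> \<delta> / 2}" using \<phi>nz by blast
    qed
    have SW: "S \<subseteq> W"
    proof
      fix x assume "x \<in> S"
      then have "infdist x K \<le> \<delta> / 2" using Ssub by blast
      then show "x \<in> W" using \<delta>0 by (simp add: W_def)
    qed
    have Scomp: "compact S"
    proof -
      have "bounded {x. infdist x K \<le> \<delta> / 2}" using \<delta>0 by (intro compact_imp_bounded cN) simp
      moreover have "{x. \<phi> x \<noteq> 0} \<subseteq> {x. infdist x K \<le> \<delta> / 2}" using \<phi>nz by blast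
      ultimately have "bounded {x. \<phi> x \<noteq> 0}" by (rule bounded_subset)
      then show ?thesis unfolding S_def by (simp only: compact_closure)
    qed
    have supp: "x \<in> W" if "\<phi> x \<noteq> 0" for x
    proof -
      have "x \<in> {x. \<phi> x \<noteq> 0}" using that by simp
      then have "x \<in> S" unfolding S_def by (rule subsetD[OF closure_subset])
      then show ?thesis using SW by blast
    qed
    have \<phi>S: "ennreal (\<phi> x) \<le> indicator S x" for x
    proof (cases "x \<in> S")
      case True then show ?thesis using \<phi>le[of x] by simp
    next
      case False
      have "\<phi> x = 0"
      proof (rule ccontr)
        assume "\<phi> x \<noteq> 0"
        then have "x \<in> {x. \<phi> x \<noteq> 0}" by simp
        then have "x \<in> S" unfolding S_def by (rule subsetD[OF closure_subset])
        with False show False by simp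
      qed
      then show ?thesis by simp
    qed
    have \<phi>m: "\<phi> \<in> borel_measurable borel" using \<phi>c by (rule borel_measurable_continuous_onI)
    define I where "I u v = (\<integral>x. \<phi> x \<partial>MA W u v)" for u v

    have bound: "emeasure (MA \<Omega> u v) K \<le> ennreal (I u v)" if u: "COPSH \<Omega> u" and v: "COPSH \<Omega> v" for u v
    proof -
      have uW: "COPSH W u" using COPSH_subset[OF u WO] .
      have vW: "COPSH W v" using COPSH_subset[OF v WO] .
      have sets: "sets (MA W u v) = sets borel" by (rule MA_1[OF MA Wo uW vW])
      have Kb: "K \<in> sets borel" using Kc by (rule borel_compact)
      have Sb: "S \<in> sets borel" using Scomp by (rule borel_compact)
      have "emeasure (MA \<Omega> u v) K = emeasure (MA W u v) K"
        by (rule MA_3[OF MA Oo Wo WO u v uW vW _ Kb KW, symmetric]) simp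
      also have "\<dots> = (\<integral>\<^sup>+x. indicator K x \<partial>MA W u v)" using Kb sets by simp
      also have "\<dots> \<le> (\<integral>\<^sup>+x. ennreal (\<phi> x) \<partial>MA W u v)"
      proof (rule nn_integral_mono)
        fix x show "indicator K x \<le> ennreal (\<phi> x)"
          by (cases "x \<in> K") (simp_all add: \<phi>1)
      qed
      finally have le1: "emeasure (MA \<Omega> u v) K \<le> (\<integral>\<^sup>+x. ennreal (\<phi> x) \<partial>MA W u v)" .
      have "(\<integral>\<^sup>+x. ennreal (\<phi> x) \<partial>MA W u v) \<le> (\<integral>\<^sup>+x. indicator S x \<partial>MA W u v)"
        by (rule nn_integral_mono) (rule \<phi>S)
      also have "\<dots> = emeasure (MA W u v) S" using sets Sb by simp
      also have "\<dots> < \<infinity>" by (rule MA_1b[OF MA Wo uW vW Scomp SW])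
      finally have fin: "(\<integral>\<^sup>+x. ennreal (\<phi> x) \<partial>MA W u v) < \<infinity>" .
      have "I u v = enn2real (\<integral>\<^sup>+x. ennreal (\<phi> x) \<partial>MA W u v)"
        unfolding I_def
        by (rule integral_eq_nn_integral) (use \<phi>m \<phi>0 sets in \<open>auto simp: measurable_cong_sets[OF sets refl]\<close>)
      then have "ennreal (I u v) = (\<integral>\<^sup>+x. ennreal (\<phi> x) \<partial>MA W u v)" using fin by simp
      then show ?thesis using le1 by simp
    qed
    have bounded_I: "\<exists>C. \<forall>u v. COPSH \<Omega> u \<and> (\<forall>x\<in>\<Omega>. \<bar>u x\<bar> \<le> M) \<and>
        COPSH \<Omega> v \<and> (\<forall>x\<in>\<Omega>. \<bar>v x\<bar> \<le> M) \<longrightarrow> I u v \<le> C"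
    proof (rule ccontr)
      assume neg: "\<not> (\<exists>C. \<forall>u v. COPSH \<Omega> u \<and> (\<forall>x\<in>\<Omega>. \<bar>u x\<bar> \<le> M) \<and>
        COPSH \<Omega> v \<and> (\<forall>x\<in>\<Omega>. \<bar>v x\<bar> \<le> M) \<longrightarrow> I u v \<le> C)"
      have step: "\<exists>g h k. continuous_on UNIV g \<and> continuous_on UNIV h \<and> (\<forall>y. \<bar>g y\<bar> \<le> M) \<and> (\<forall>y. \<bar>h y\<bar> \<le> M)
          \<and> COPSH W (Sm (es k) (cbox (-a0) a0) g) \<and> COPSH W (Sm (es k) (cbox (-a0) a0) h)
          \<and> (real n + 1)^3 < I (Sm (es k) (cbox (-a0) a0) g) (Sm (es k) (cbox (-a0) a0) h)" for n :: nat
      proof -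
        obtain u v where uv: "COPSH \<Omega> u" "\<forall>x\<in>\<Omega>. \<bar>u x\<bar> \<le> M" "COPSH \<Omega> v" "\<forall>x\<in>\<Omega>. \<bar>v x\<bar> \<le> M"
          and big: "\<not> I u v \<le> (real n + 1)^3"
          using neg by blast
        have uc: "continuous_on Q u" using uv(1) QO unfolding COPSH_def by (blast intro: continuous_on_subset)
        have vc: "continuous_on Q v" using uv(3) QO unfolding COPSH_def by (blast intro: continuous_on_subset)
        have Qcl: "closed Q" using Qc by (rule compact_imp_closed)
        have uQ: "\<And>x. x \<in> Q \<Longrightarrow> \<bar>u x\<bar> \<le> M" using uv(2) QO by blast
        have vQ: "\<And>x. x \<in> Q \<Longrightarrow> \<bar>v x\<bar> \<le> M" using uv(4) QO by blast
        obtain g where g: "continuous_on UNIV g" "\<And>y. \<bar>g y\<bar> \<le> M" "\<And>z. z \<in> Q \<Longrightarrow> g z = u z"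
          using exists_ext[OF uc Qcl _ uQ] M0 by auto
        obtain h where h: "continuous_on UNIV h" "\<And>y. \<bar>h y\<bar> \<le> M" "\<And>z. z \<in> Q \<Longrightarrow> h z = v z"
          using exists_ext[OF vc Qcl _ vQ] M0 by auto
        have uW: "COPSH W u" using COPSH_subset[OF uv(1) WO] .
        have vW: "COPSH W v" using COPSH_subset[OF uv(3) WO] .
        have guk: "z \<in> \<Omega> \<and> g z = u z" if "x \<in> W" "dist x z \<le> es k" for x z k
        proof -
          have "z \<in> Q" using inQ[OF that(1)] that(2) esD[of k] by simp
          then show ?thesis using g(3) QO by blast
        qed
        have hvk: "z \<in> \<Omega> \<and> h z = v z" if "x \<in> W" "dist x z \<le> es k" for x z k
        proof -
          have "z \<in> Q" using inQ[OF that(1)] that(2) esD[of k] by simp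
          then show ?thesis using h(3) QO by blast
        qed
        have boxk: "cball x (es k) \<subseteq> cbox (-a0) a0" if "x \<in> W" for x k
          using box[OF that es0 esD] .
        have cg: "COPSH W (Sm (es k) (cbox (-a0) a0) g)" for k
          by (rule Sm_COPSH[OF g(1) es0 boxk guk uv(1)])
        have ch: "COPSH W (Sm (es k) (cbox (-a0) a0) h)" for k
          by (rule Sm_COPSH[OF h(1) es0 boxk hvk uv(3)])
        have gW: "g x = u x" if "x \<in> W" for x using g(3)[OF inQ[OF that, of x]] \<delta>0 by simp
        have hW: "h x = v x" if "x \<in> W" for x using h(3)[OF inQ[OF that, of x]] \<delta>0 by simp
        have ug: "uniform_limit W (\<lambda>k. Sm (es k) (cbox (-a0) a0) g) u sequentially"
          unfolding es_def by (rule Sm_unif[OF g(1) \<delta>0 box Qc inQ gW])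
        have uh: "uniform_limit W (\<lambda>k. Sm (es k) (cbox (-a0) a0) h) v sequentially"
          unfolding es_def by (rule Sm_unif[OF h(1) \<delta>0 box Qc inQ hW])
        have lim: "(\<lambda>k. I (Sm (es k) (cbox (-a0) a0) g) (Sm (es k) (cbox (-a0) a0) h)) \<longlonglongrightarrow> I u v"
          unfolding I_def
        proof (rule MA_4[OF MA Wo _ uW vW _ \<phi>c _ _])
          show "\<forall>j. COPSH W (Sm (es j) (cbox (-a0) a0) g) \<and> COPSH W (Sm (es j) (cbox (-a0) a0) h)"
            using cg ch by blast
          show "\<forall>K'. compact K' \<and> K' \<subseteq> W \<longrightarrow> uniform_limit K' (\<lambda>k. Sm (es k) (cbox (-a0) a0) g) u sequentially \<and>
              uniform_limit K' (\<lambda>k. Sm (es k) (cbox (-a0) a0) h) v sequentially"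
            using uniform_limit_on_subset[OF ug] uniform_limit_on_subset[OF uh] by blast
          show "compact (closure {x. \<phi> x \<noteq> 0})" using Scomp by (simp add: S_def)
          show "closure {x. \<phi> x \<noteq> 0} \<subseteq> W" using SW by (simp add: S_def)
        qed
        have "(real n + 1)^3 < I u v" using big by simp
        from order_tendstoD(1)[OF lim this]
        obtain k where "(real n + 1)^3 < I (Sm (es k) (cbox (-a0) a0) g) (Sm (es k) (cbox (-a0) a0) h)"
          by (auto simp: eventually_sequentially)
        then show ?thesis using g(1,2) h(1,2) cg ch by blast
      qed
      obtain G H Kn where GH: "\<And>n. continuous_on UNIV (G n) \<and> continuous_on UNIV (H n) \<and> (\<forall>y. \<bar>G n y\<bar> \<le> M) \<and> (\<forall>y. \<bar>H n y\<bar> \<le> M)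
          \<and> COPSH W (Sm (es (Kn n)) (cbox (-a0) a0) (G n)) \<and> COPSH W (Sm (es (Kn n)) (cbox (-a0) a0) (H n))
          \<and> (real n + 1)^3 < I (Sm (es (Kn n)) (cbox (-a0) a0) (G n)) (Sm (es (Kn n)) (cbox (-a0) a0) (H n))"
        using step by metis
      define t where "t n = 1 / (real n + 1)" for n :: nat
      have t0: "t n \<ge> 0" for n by (simp add: t_def)
      define w where "w n = Sm (es (Kn n)) (cbox (-a0) a0) (\<lambda>y. t n * G n y)" for n
      define w' where "w' n = Sm (es (Kn n)) (cbox (-a0) a0) (\<lambda>y. t n * H n y)" for n
      define Z where "Z = Sm (es (Kn 0)) (cbox (-a0) a0) (\<lambda>y. 0 * G 0 y)"
      define Z' where "Z' = Sm (es (Kn 0)) (cbox (-a0) a0) (\<lambda>y. 0 * H 0 y)"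
      have cw: "COPSH W (w n)" for n
        unfolding w_def Sm_scale using GH[of n] t0[of n] by (blast intro: COPSH_scale)
      have cw': "COPSH W (w' n)" for n
        unfolding w'_def Sm_scale using GH[of n] t0[of n] by (blast intro: COPSH_scale)
      have cZ: "COPSH W Z"
        unfolding Z_def Sm_scale using GH[of 0] by (blast intro: COPSH_scale)
      have cZ': "COPSH W Z'"
        unfolding Z'_def Sm_scale using GH[of 0] by (blast intro: COPSH_scale)
      have Iw: "I (w n) (w' n) = (t n)^2 * I (Sm (es (Kn n)) (cbox (-a0) a0) (G n)) (Sm (es (Kn n)) (cbox (-a0) a0) (H n))" for n
        unfolding I_def w_def w'_def
        by (rule I_Sm_scale[OF MA Wo _ _ _ _ \<phi>c \<phi>0 supp t0]) (use GH[of n] in blast)+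
      have IZ: "I Z Z' = 0"
      proof -
        have "I Z Z' = 0^2 * I (Sm (es (Kn 0)) (cbox (-a0) a0) (G 0)) (Sm (es (Kn 0)) (cbox (-a0) a0) (H 0))"
          unfolding I_def Z_def Z'_def
          by (rule I_Sm_scale[OF MA Wo _ _ _ _ \<phi>c \<phi>0 supp]) (use GH[of 0] in auto)
        then show ?thesis by simp
      qed
      have ge1: "1 \<le> I (w n) (w' n)" for n
      proof -
        have pos: "(real n + 1) > 0" by simp
        have key: "(1/r)^2 * r^3 = r" if "r > 0" for r :: real
          using that by (simp add: power2_eq_square power3_eq_cube)
        have "(t n)^2 * (real n + 1)^3 = real n + 1" unfolding t_def by (rule key[OF pos])
        moreover have "(t n)^2 * (real n + 1)^3 \<le> (t n)^2 * I (Sm (es (Kn n)) (cbox (-a0) a0) (G n)) (Sm (es (Kn n)) (cbox (-a0) a0) (H n))"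
          using GH[of n] by (intro mult_left_mono) auto
        ultimately show ?thesis unfolding Iw by simp
      qed
      have Z0: "Z x = 0" for x unfolding Z_def Sm_scale by simp
      have Z'0: "Z' x = 0" for x unfolding Z'_def Sm_scale by simp
      have wb: "\<bar>w n x\<bar> \<le> M / (real n + 1)" if "x \<in> W" for n x
      proof -
        have "\<bar>Sm (es (Kn n)) (cbox (-a0) a0) (G n) x\<bar> \<le> M"
          by (rule Sm_bound[OF _ es0 box[OF that es0 esD]]) (use GH[of n] in auto)
        then have "t n * \<bar>Sm (es (Kn n)) (cbox (-a0) a0) (G n) x\<bar> \<le> t n * M" by (rule mult_left_mono) (rule t0)
        then show ?thesis unfolding w_def Sm_scale by (simp add: t_def abs_mult)
      qed
      have wb': "\<bar>w' n x\<bar> \<le> M / (real n + 1)" if "x \<in> W" for n x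
      proof -
        have "\<bar>Sm (es (Kn n)) (cbox (-a0) a0) (H n) x\<bar> \<le> M"
          by (rule Sm_bound[OF _ es0 box[OF that es0 esD]]) (use GH[of n] in auto)
        then have "t n * \<bar>Sm (es (Kn n)) (cbox (-a0) a0) (H n) x\<bar> \<le> t n * M" by (rule mult_left_mono) (rule t0)
        then show ?thesis unfolding w'_def Sm_scale by (simp add: t_def abs_mult)
      qed
      have unif0: "uniform_limit W f (\<lambda>x. 0) sequentially"
        if fb: "\<And>n x. x \<in> W \<Longrightarrow> \<bar>f n x\<bar> \<le> M / (real n + 1)" for f :: "nat \<Rightarrow> oct2 \<Rightarrow> real"
      proof (rule uniform_limitI)
        fix \<eta> :: real assume \<eta>: "\<eta> > 0"
        obtain N :: nat where N: "M / \<eta> < real N" using reals_Archimedean2 by blast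
        show "\<forall>\<^sub>F n in sequentially. \<forall>x\<in>W. dist (f n x) 0 < \<eta>"
          unfolding eventually_sequentially
        proof (intro exI allI impI ballI)
          fix n x assume n: "N \<le> n" and x: "x \<in> W"
          have "M < real N * \<eta>" using N \<eta> by (simp add: pos_divide_less_eq)
          also have "\<dots> \<le> (real n + 1) * \<eta>" using n \<eta> by (intro mult_right_mono) auto
          finally have "M / (real n + 1) < \<eta>" by (simp add: pos_divide_less_eq mult.commute)
          then show "dist (f n x) 0 < \<eta>" using fb[OF x, of n] by simp
        qed
      qed
      have uw: "uniform_limit W w Z sequentially"
      proof -
        have "Z = (\<lambda>x. 0)" using Z0 by (simp add: fun_eq_iff)
        then show ?thesis using unif0[OF wb] by simp
      qed
      have uw': "uniform_limit W w' Z' sequentially"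
      proof -
        have "Z' = (\<lambda>x. 0)" using Z'0 by (simp add: fun_eq_iff)
        then show ?thesis using unif0[OF wb'] by simp
      qed
      have lim: "(\<lambda>n. I (w n) (w' n)) \<longlonglongrightarrow> I Z Z'"
        unfolding I_def
      proof (rule MA_4[OF MA Wo _ cZ cZ' _ \<phi>c _ _])
        show "\<forall>j. COPSH W (w j) \<and> COPSH W (w' j)" using cw cw' by blast
        show "\<forall>K'. compact K' \<and> K' \<subseteq> W \<longrightarrow> uniform_limit K' w Z sequentially \<and> uniform_limit K' w' Z' sequentially"
          using uniform_limit_on_subset[OF uw] uniform_limit_on_subset[OF uw'] by blast
        show "compact (closure {x. \<phi> x \<noteq> 0})" using Scomp by (simp add: S_def)
        show "closure {x. \<phi> x \<noteq> 0} \<subseteq> W" using SW by (simp add: S_def)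
      qed
      have "1 \<le> I Z Z'"
        by (rule LIMSEQ_le_const[OF lim]) (use ge1 in blast)
      then show False using IZ by simp
    qed
    then obtain C where C: "\<And>u v. COPSH \<Omega> u \<and> (\<forall>x\<in>\<Omega>. \<bar>u x\<bar> \<le> M) \<and>
        COPSH \<Omega> v \<and> (\<forall>x\<in>\<Omega>. \<bar>v x\<bar> \<le> M) \<Longrightarrow> I u v \<le> C" by blast
    show ?thesis
    proof (intro exI allI impI)
      fix u v assume uv: "COPSH \<Omega> u \<and> (\<forall>x\<in>\<Omega>. \<bar>u x\<bar> \<le> M) \<and> COPSH \<Omega> v \<and> (\<forall>x\<in>\<Omega>. \<bar>v x\<bar> \<le> M)"
      have "emeasure (MA \<Omega> u v) K \<le> ennreal (I u v)" using bound uv by blast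
      also have "\<dots> \<le> ennreal C" using C[OF uv] by (rule ennreal_leI)
      finally show "emeasure (MA \<Omega> u v) K \<le> ennreal C" .
    qed
  qed
qed

end
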